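(* Let $\mathbf{Ring}$ be the category of (commutative) unital rings, $\mathbf{Digraph}$ the category of digraphs with regular morphisms, and $\mathbf{Ab}^{\mathrm{gr}}$ the category of graded abelian groups. Then multipath cohomology with constant coefficients \[\mathrm{H}_\mu(-;-)\colon \mathbf{Digraph}^{\mathrm{op}}\times\mathbf{Ring}\to\mathbf{Ab}^{\mathrm{gr}},\qquad({\tt G},R)\mapsto \mathrm{H}^*_\mu({\tt G};R)=\mathrm{H}^*_\mu({\tt G};R,R),\] is a bifunctor.
   Context: A digraph ${\tt G}=(V,E)$ has a finite vertex set $V$ and edge set $E\subseteq (V\times V)\setminus\{(v,v)\}$; a regular morphism is an injective vertex map sending edges to edges. A multipath of ${\tt G}$ is a spanning subgraph (all vertices, a subset of the edges) each of whose connected components (of the underlying undirected graph) is a single vertex or a simple directed path (edges $e_1,\dots,e_k$ with target of $e_i$ equal to source of $e_{i+1}$, no repeated vertex, not a cycle). $P({\tt G})$ is the set of multipaths ordered by inclusion of edge sets; ${\tt H}\prec{\tt H}'$ iff ${\tt H}'$ is obtained from ${\tt H}$ by adding one edge. With constant coefficients $A=M=R$, each multipath contributes $\mathcal F({\tt H})=R^{\otimes(\#\text{components})}\cong R$, and covering maps are multiplications (identity under these identifications). Fix a total order on the vertices; order components of a multipath by minimal vertex; for ${\tt H}\prec{\tt H}\cup e$ let $s,t$ be the indices of the components containing the source and target of $e$, and let $\sigma({\tt H},{\tt H}\cup e)=t+1$ if $t>s$ and $s$ if $s>t$ (mod 2). Then $C^n_\mu({\tt G};R)=\bigoplus_{{\tt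 H}\in P({\tt G}),\#E({\tt H})=n}\mathcal F({\tt H})$ with $d=\sum_{{\tt H}\prec{\tt H}'}(-1)^{\sigma({\tt H},{\tt H}')}\mathcal F({\tt H}\prec{\tt H}')$, and $\mathrm{H}^*_\mu({\tt G};R)$ is its cohomology. A ring homomorphism $f\colon R\to S$ acts via extension of scalars $S\otimes_R(-)$, using $S\otimes_R R^{\otimes k}\cong S$; a regular morphism $\phi\colon{\tt G}'\to{\tt G}$ acts through the cochain map projecting $C_\mu({\tt G};R)$ onto summands indexed by multipaths in the image of $P({\tt G}')$ (edges $\phi(E({\tt H}))$), identified with the summands of $C_\mu({\tt G}';R)$. *)

theory Defs
  imports "HOL-Algebra.Algebra" "HOL-Library.Product_Lexorder"
begin

definition digraph :: "'v set \<Rightarrow> ('v \<times> 'v) set \<Rightarrow> bool" where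
  "digraph V E \<longleftrightarrow> finite V \<and> E \<subseteq> V \<times> V \<and> (\<forall>v. (v, v) \<notin> E)"

definition regular_morphism ::
  "'w set \<Rightarrow> ('w \<times> 'w) set \<Rightarrow> 'v set \<Rightarrow> ('v \<times> 'v) set \<Rightarrow> ('w \<Rightarrow> 'v) \<Rightarrow> bool" where
  "regular_morphism V' E' V E \<phi> \<longleftrightarrow>
     inj_on \<phi> V' \<and> \<phi> ` V' \<subseteq> V \<and> (\<forall>(a, b) \<in> E'. (\<phi> a, \<phi> b) \<in> E)"

definition ring_homomorphism :: "('r::comm_ring_1 \<Rightarrow> 's::comm_ring_1) \<Rightarrow> bool" where
  "ring_homomorphism f \<longleftrightarrow> f 1 = 1 \<and> (\<forall>x y. f (x + y) = f x + f y) \<and> (\<forall>x y. f (x * y) = f x * f y)"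

definition comp_of :: "'v set \<Rightarrow> ('v \<times> 'v) set \<Rightarrow> 'v \<Rightarrow> 'v set" where
  "comp_of V H v = {w \<in> V. (v, w) \<in> (H \<union> H\<inverse>)\<^sup>*}"

definition comps :: "'v set \<Rightarrow> ('v \<times> 'v) set \<Rightarrow> 'v set set" where
  "comps V H = comp_of V H ` V"

definition is_dipath :: "'v set \<Rightarrow> ('v \<times> 'v) set \<Rightarrow> bool" where
  "is_dipath C F \<longleftrightarrow> (\<exists>vs. distinct vs \<and> set vs = C \<and> F = set (zip vs (tl vs)))"

definition multipaths :: "'v set \<Rightarrow> ('v \<times> 'v) set \<Rightarrow> ('v \<times> 'v) set set" where
  "multipaths V E = {H. H \<subseteq> E \<and> (\<forall>C \<in> comps V H. is_dipath C (H \<inter> (C \<times> C)))}"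

definition multipaths_n :: "'v set \<Rightarrow> ('v \<times> 'v) set \<Rightarrow> nat \<Rightarrow> ('v \<times> 'v) set set" where
  "multipaths_n V E n = {H \<in> multipaths V E. card H = n}"

text \<open>Index (starting at 1) of the component containing v, components ordered by
  their minimal vertex.\<close>
definition comp_index :: "'v::linorder set \<Rightarrow> ('v \<times> 'v) set \<Rightarrow> 'v \<Rightarrow> nat" where
  "comp_index V H v = card {D \<in> comps V H. Min D < Min (comp_of V H v)} + 1"

definition sigma :: "'v::linorder set \<Rightarrow> ('v \<times> 'v) set \<Rightarrow> ('v \<times> 'v) \<Rightarrow> nat" where
  "sigma V H e = (let s = comp_index V H (fst e); t = comp_index V H (snd e)
                  in if t > s then t + 1 else s)"

text \<open>The sign (-1)^sigma(H, H \<union> {e}).\<close>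
definition eps :: "'v::linorder set \<Rightarrow> ('v \<times> 'v) set \<Rightarrow> ('v \<times> 'v) \<Rightarrow> int" where
  "eps V H e = (-1) ^ sigma V H e"

text \<open>C^n: an element of the direct sum of copies of R indexed by multipaths with n
  edges is a function on edge sets supported on those multipaths.\<close>
definition cochains :: "'v set \<Rightarrow> ('v \<times> 'v) set \<Rightarrow> nat \<Rightarrow> (('v \<times> 'v) set \<Rightarrow> 'r::comm_ring_1) set" where
  "cochains V E n = {c. \<forall>H. c H \<noteq> 0 \<longrightarrow> H \<in> multipaths_n V E n}"

definition cochain_grp :: "'v set \<Rightarrow> ('v \<times> 'v) set \<Rightarrow> nat \<Rightarrow> (('v \<times> 'v) set \<Rightarrow> 'r::comm_ring_1) monoid" where
  "cochain_grp V E n = \<lparr>carrier = cochains V E n, monoid.mult = (\<lambda>x y H. x H + y H), monoid.one = (\<lambda>_. 0)\<rparr>"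

definition dmap :: "'v::linorder set \<Rightarrow> ('v \<times> 'v) set \<Rightarrow> nat \<Rightarrow>
    (('v \<times> 'v) set \<Rightarrow> 'r::comm_ring_1) \<Rightarrow> (('v \<times> 'v) set \<Rightarrow> 'r)" where
  "dmap V E n c = (\<lambda>H'. if H' \<in> multipaths_n V E (Suc n)
      then (\<Sum>e\<in>H'. of_int (eps V (H' - {e}) e) * c (H' - {e})) else 0)"

definition cocycles :: "'v::linorder set \<Rightarrow> ('v \<times> 'v) set \<Rightarrow> nat \<Rightarrow> (('v \<times> 'v) set \<Rightarrow> 'r::comm_ring_1) set" where
  "cocycles V E n = {c \<in> cochains V E n. dmap V E n c = (\<lambda>_. 0)}"

fun coboundaries :: "'v::linorder set \<Rightarrow> ('v \<times> 'v) set \<Rightarrow> nat \<Rightarrow> (('v \<times> 'v) set \<Rightarrow> 'r::comm_ring_1) set" where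
  "coboundaries V E 0 = {\<lambda>_. 0}"
| "coboundaries V E (Suc n) = dmap V E n ` cochains V E n"

definition mp_cohom :: "'v::linorder set \<Rightarrow> ('v \<times> 'v) set \<Rightarrow> nat \<Rightarrow> (('v \<times> 'v) set \<Rightarrow> 'r::comm_ring_1) set monoid" where
  "mp_cohom V E n = ((cochain_grp V E n)\<lparr>carrier := cocycles V E n\<rparr>) Mod (coboundaries V E n)"

text \<open>Canonical gauge (normalised at the empty multipath) comparing the sign
  assignment of G restricted along phi with the sign assignment of G'; computed along
  the chain adding the edges of H' in increasing order.\<close>
definition gauge :: "'v::linorder set \<Rightarrow> 'w::linorder set \<Rightarrow> ('w \<Rightarrow> 'v) \<Rightarrow> ('w \<times> 'w) set \<Rightarrow> int" where
  "gauge V V' \<phi> H' = (let es = sorted_list_of_set H' in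
     \<Prod>i<length es. eps V (map_prod \<phi> \<phi> ` set (take i es)) (map_prod \<phi> \<phi> (es ! i))
                   * eps V' (set (take i es)) (es ! i))"

text \<open>Cochain map C(G;R) -> C(G';S) induced by phi : G' -> G and f : R -> S:
  extension of scalars followed by projection onto the summands indexed by images of
  multipaths of G', identified with those of G' (up to the canonical gauge).\<close>
definition pull :: "'v::linorder set \<Rightarrow> 'w::linorder set \<Rightarrow> ('w \<times> 'w) set \<Rightarrow> nat \<Rightarrow>
    ('w \<Rightarrow> 'v) \<Rightarrow> ('r::comm_ring_1 \<Rightarrow> 's::comm_ring_1) \<Rightarrow>
    (('v \<times> 'v) set \<Rightarrow> 'r) \<Rightarrow> (('w \<times> 'w) set \<Rightarrow> 's)" where
  "pull V V' E' n \<phi> f c = (\<lambda>H'. if H' \<in> multipaths_n V' E' n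
      then of_int (gauge V V' \<phi> H') * f (c (map_prod \<phi> \<phi> ` H')) else 0)"

definition cohom_map :: "'v::linorder set \<Rightarrow> 'w::linorder set \<Rightarrow> ('w \<times> 'w) set \<Rightarrow> nat \<Rightarrow>
    ('w \<Rightarrow> 'v) \<Rightarrow> ('r::comm_ring_1 \<Rightarrow> 's::comm_ring_1) \<Rightarrow>
    (('v \<times> 'v) set \<Rightarrow> 'r) set \<Rightarrow> (('w \<times> 'w) set \<Rightarrow> 's) set" where
  "cohom_map V V' E' n \<phi> f cl =
     Union ((\<lambda>x. coboundaries V' E' n #>\<^bsub>cochain_grp V' E' n\<^esub> pull V V' E' n \<phi> f x) ` cl)"

end

theory Submission
  imports Defs
begin

abbreviation "RR H \<equiv> H \<union> H\<inverse>"

lemma RR_sym: "(x,y) \<in> (RR H)\<^sup>* \<Longrightarrow> (y,x) \<in> (RR H)\<^sup>*"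
proof -
  assume "(x,y) \<in> (RR H)\<^sup>*"
  hence "(y,x) \<in> ((RR H)\<inverse>)\<^sup>*" by (simp add: rtrancl_converse)
  moreover have "(RR H)\<inverse> = RR H" by auto
  ultimately show ?thesis by simp
qed

lemma reach_insert:
  "(v,w) \<in> (RR (insert (a,b) H))\<^sup>* \<longleftrightarrow>
    (v,w) \<in> (RR H)\<^sup>* \<or> ((v,a) \<in> (RR H)\<^sup>* \<and> (b,w) \<in> (RR H)\<^sup>*) \<or> ((v,b) \<in> (RR H)\<^sup>* \<and> (a,w) \<in> (RR H)\<^sup>*)"
proof
  assume "(v,w) \<in> (RR (insert (a,b) H))\<^sup>*"
  then show "(v,w) \<in> (RR H)\<^sup>* \<or> ((v,a) \<in> (RR H)\<^sup>* \<and> (b,w) \<in> (RR H)\<^sup>*) \<or> ((v,b) \<in> (RR H)\<^sup>* \<and> (a,w) \<in> (RR H)\<^sup>*)"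
  proof (induct rule: rtrancl_induct)
    case base then show ?case by simp
  next
    case (step y z)
    from step(2) have "(y,z) \<in> RR H \<or> (y,z) = (a,b) \<or> (y,z) = (b,a)" by auto
    then show ?case
    proof (elim disjE)
      assume "(y,z) \<in> RR H"
      then show ?thesis using step(3) by (meson rtrancl.rtrancl_into_rtrancl)
    next
      assume yz: "(y,z) = (a,b)"
      from step(3) show ?thesis
      proof (elim disjE conjE)
        assume "(v,y) \<in> (RR H)\<^sup>*" then show ?thesis using yz by auto
      next
        assume "(v,a) \<in> (RR H)\<^sup>*" "(b,y) \<in> (RR H)\<^sup>*"
        then show ?thesis using yz by auto
      next
        assume "(v,b) \<in> (RR H)\<^sup>*" "(a,y) \<in> (RR H)\<^sup>*"
        then show ?thesis using yz by auto
      qed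
    next
      assume yz: "(y,z) = (b,a)"
      from step(3) show ?thesis
      proof (elim disjE conjE)
        assume "(v,y) \<in> (RR H)\<^sup>*" then show ?thesis using yz by auto
      next
        assume "(v,a) \<in> (RR H)\<^sup>*" "(b,y) \<in> (RR H)\<^sup>*"
        then show ?thesis using yz by auto
      next
        assume "(v,b) \<in> (RR H)\<^sup>*" "(a,y) \<in> (RR H)\<^sup>*"
        then show ?thesis using yz by auto
      qed
    qed
  qed
next
  have mono: "(RR H)\<^sup>* \<subseteq> (RR (insert (a,b) H))\<^sup>*" by (rule rtrancl_mono) auto
  have ab: "(a,b) \<in> (RR (insert (a,b) H))\<^sup>*" "(b,a) \<in> (RR (insert (a,b) H))\<^sup>*" by auto
  assume "(v,w) \<in> (RR H)\<^sup>* \<or> ((v,a) \<in> (RR H)\<^sup>* \<and> (b,w) \<in> (RR H)\<^sup>*) \<or> ((v,b) \<in> (RR H)\<^sup>* \<and> (a,w) \<in> (RR H)\<^sup>*)"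
  then show "(v,w) \<in> (RR (insert (a,b) H))\<^sup>*"
    using mono ab by (meson rtrancl_trans subsetD)
qed

lemma reach_in_V: assumes "H \<subseteq> V \<times> V" "(v,w) \<in> (RR H)\<^sup>*" "v \<in> V" shows "w \<in> V"
  using assms(2) by (induct rule: rtrancl_induct) (use assms in auto)

lemma comp_of_self: "v \<in> V \<Longrightarrow> v \<in> comp_of V H v"
  by (simp add: comp_of_def)

lemma comp_of_eq_iff:
  assumes "v \<in> V" "w \<in> V"
  shows "comp_of V H v = comp_of V H w \<longleftrightarrow> (v,w) \<in> (RR H)\<^sup>*"
proof
  assume "comp_of V H v = comp_of V H w"
  then have "w \<in> comp_of V H v" using comp_of_self[OF assms(2)] by simp
  then show "(v,w) \<in> (RR H)\<^sup>*" by (simp add: comp_of_def)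
next
  assume vw: "(v,w) \<in> (RR H)\<^sup>*"
  then have wv: "(w,v) \<in> (RR H)\<^sup>*" by (rule RR_sym)
  show "comp_of V H v = comp_of V H w"
    unfolding comp_of_def using vw wv by (meson rtrancl_trans)
qed

lemma mem_comp_of: "w \<in> comp_of V H v \<longleftrightarrow> w \<in> V \<and> (v,w) \<in> (RR H)\<^sup>*"
  by (simp add: comp_of_def)

lemma comp_of_mem_eq:
  assumes "v \<in> V" "w \<in> comp_of V H v"
  shows "comp_of V H w = comp_of V H v"
  using assms comp_of_eq_iff[of v V w H] by (auto simp: mem_comp_of)

lemma comps_disj:
  assumes "C \<in> comps V H" "D \<in> comps V H" "x \<in> C" "x \<in> D"
  shows "C = D"
proof -
  obtain v w where v: "v \<in> V" "C = comp_of V H v" and w: "w \<in> V" "D = comp_of V H w"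
    using assms(1,2) unfolding comps_def by auto
  have "comp_of V H x = C" using comp_of_mem_eq[OF v(1)] v assms(3) by simp
  moreover have "comp_of V H x = D" using comp_of_mem_eq[OF w(1)] w assms(4) by simp
  ultimately show ?thesis by simp
qed

lemma comp_of_insert:
  assumes "v \<in> V"
  shows "comp_of V (insert (a,b) H) v =
    (if (v,a) \<in> (RR H)\<^sup>* \<or> (v,b) \<in> (RR H)\<^sup>* then comp_of V H a \<union> comp_of V H b else comp_of V H v)"
proof (cases "(v,a) \<in> (RR H)\<^sup>* \<or> (v,b) \<in> (RR H)\<^sup>*")
  case True
  have key: "((v,w) \<in> (RR H)\<^sup>* \<or> ((v,a) \<in> (RR H)\<^sup>* \<and> (b,w) \<in> (RR H)\<^sup>*) \<or> ((v,b) \<in> (RR H)\<^sup>* \<and> (a,w) \<in> (RR H)\<^sup>*))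
     \<longleftrightarrow> ((a,w) \<in> (RR H)\<^sup>* \<or> (b,w) \<in> (RR H)\<^sup>*)" for w
  proof (cases "(v,a) \<in> (RR H)\<^sup>*")
    case va: True
    have av: "(a,v) \<in> (RR H)\<^sup>*" using RR_sym[OF va] .
    show ?thesis
    proof
      assume "(v,w) \<in> (RR H)\<^sup>* \<or> ((v,a) \<in> (RR H)\<^sup>* \<and> (b,w) \<in> (RR H)\<^sup>*) \<or> ((v,b) \<in> (RR H)\<^sup>* \<and> (a,w) \<in> (RR H)\<^sup>*)"
      then show "(a,w) \<in> (RR H)\<^sup>* \<or> (b,w) \<in> (RR H)\<^sup>*"
        using rtrancl_trans[OF av, of w] by blast
    next
      assume "(a,w) \<in> (RR H)\<^sup>* \<or> (b,w) \<in> (RR H)\<^sup>*"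
      then show "(v,w) \<in> (RR H)\<^sup>* \<or> ((v,a) \<in> (RR H)\<^sup>* \<and> (b,w) \<in> (RR H)\<^sup>*) \<or> ((v,b) \<in> (RR H)\<^sup>* \<and> (a,w) \<in> (RR H)\<^sup>*)"
        using rtrancl_trans[OF va, of w] va by blast
    qed
  next
    case na: False
    then have vb: "(v,b) \<in> (RR H)\<^sup>*" using True by blast
    have bv: "(b,v) \<in> (RR H)\<^sup>*" using RR_sym[OF vb] .
    show ?thesis
    proof
      assume "(v,w) \<in> (RR H)\<^sup>* \<or> ((v,a) \<in> (RR H)\<^sup>* \<and> (b,w) \<in> (RR H)\<^sup>*) \<or> ((v,b) \<in> (RR H)\<^sup>* \<and> (a,w) \<in> (RR H)\<^sup>*)"
      then show "(a,w) \<in> (RR H)\<^sup>* \<or> (b,w) \<in> (RR H)\<^sup>*"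
        using rtrancl_trans[OF bv, of w] na by blast
    next
      assume "(a,w) \<in> (RR H)\<^sup>* \<or> (b,w) \<in> (RR H)\<^sup>*"
      then show "(v,w) \<in> (RR H)\<^sup>* \<or> ((v,a) \<in> (RR H)\<^sup>* \<and> (b,w) \<in> (RR H)\<^sup>*) \<or> ((v,b) \<in> (RR H)\<^sup>* \<and> (a,w) \<in> (RR H)\<^sup>*)"
        using rtrancl_trans[OF vb, of w] vb by blast
    qed
  qed
  show ?thesis using True key reach_insert[of v _ a b H] unfolding comp_of_def by auto
next
  case False
  then show ?thesis unfolding comp_of_def using reach_insert[of v _ a b H] by auto
qed

lemma comps_insert_conn:
  assumes "a \<in> V" "b \<in> V" "(a,b) \<in> (RR H)\<^sup>*"
  shows "comps V (insert (a,b) H) = comps V H"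
proof -
  have "comp_of V (insert (a,b) H) v = comp_of V H v" if "v \<in> V" for v
  proof (cases "(v,a) \<in> (RR H)\<^sup>* \<or> (v,b) \<in> (RR H)\<^sup>*")
    case True
    have "comp_of V H a = comp_of V H b" using assms comp_of_eq_iff by metis
    moreover have "comp_of V H v = comp_of V H a \<or> comp_of V H v = comp_of V H b"
      using True comp_of_eq_iff assms that by metis
    ultimately show ?thesis using comp_of_insert[OF that] True by auto
  next
    case False
    then show ?thesis using comp_of_insert[OF that] by auto
  qed
  then show ?thesis unfolding comps_def by auto
qed

lemma comps_insert_nconn:
  assumes "a \<in> V" "b \<in> V" "(a,b) \<notin> (RR H)\<^sup>*"
  shows "comps V (insert (a,b) H) = insert (comp_of V H a \<union> comp_of V H b) (comps V H - {comp_of V H a, comp_of V H b})"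
proof -
  have eq: "comp_of V (insert (a,b) H) v =
    (if comp_of V H v = comp_of V H a \<or> comp_of V H v = comp_of V H b then comp_of V H a \<union> comp_of V H b else comp_of V H v)"
    if "v \<in> V" for v
    using comp_of_insert[OF that, of a b H] comp_of_eq_iff[OF that, of a H] comp_of_eq_iff[OF that, of b H] assms
    by auto
  show ?thesis
  proof
    show "comps V (insert (a, b) H) \<subseteq> insert (comp_of V H a \<union> comp_of V H b) (comps V H - {comp_of V H a, comp_of V H b})"
      unfolding comps_def using eq by auto
  next
    have "comp_of V H a \<union> comp_of V H b \<in> comps V (insert (a, b) H)"
      unfolding comps_def using eq[OF assms(1)] assms(1) by force
    moreover have "C \<in> comps V (insert (a, b) H)" if Ch: "C \<in> comps V H" "C \<noteq> comp_of V H a" "C \<noteq> comp_of V H b" for C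
    proof -
      obtain v where v: "v \<in> V" "C = comp_of V H v" using Ch(1) unfolding comps_def by auto
      have "comp_of V (insert (a,b) H) v = C" using eq[OF v(1)] v Ch by auto
      then show ?thesis unfolding comps_def using v(1) by blast
    qed
    ultimately show "insert (comp_of V H a \<union> comp_of V H b) (comps V H - {comp_of V H a, comp_of V H b}) \<subseteq> comps V (insert (a, b) H)"
      by blast
  qed
qed

lemma finite_comps: "finite V \<Longrightarrow> finite (comps V H)"
  by (simp add: comps_def)

lemma card_comps_insert_nconn:
  assumes "finite V" "a \<in> V" "b \<in> V" "(a,b) \<notin> (RR H)\<^sup>*"
  shows "card (comps V (insert (a,b) H)) + 1 = card (comps V H)"
proof -
  let ?A = "comp_of V H a" and ?B = "comp_of V H b"
  have ne: "?A \<noteq> ?B" using assms comp_of_eq_iff by metis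
  have inA: "?A \<in> comps V H" "?B \<in> comps V H" using assms by (auto simp: comps_def)
  have nin: "?A \<union> ?B \<notin> comps V H - {?A, ?B}"
  proof
    assume "?A \<union> ?B \<in> comps V H - {?A, ?B}"
    then have "?A \<union> ?B = ?A" using comps_disj[of "?A \<union> ?B" V H ?A a] inA comp_of_self[OF assms(2)] by auto
    moreover have "?A \<union> ?B = ?B" using \<open>?A \<union> ?B \<in> comps V H - {?A, ?B}\<close>
      comps_disj[of "?A \<union> ?B" V H ?B b] inA comp_of_self[OF assms(3)] by auto
    ultimately show False using ne by simp
  qed
  have "card (comps V (insert (a,b) H)) = card (comps V H - {?A, ?B}) + 1"
    using comps_insert_nconn[OF assms(2-4)] nin finite_comps[OF assms(1)] by simp
  moreover have "card (comps V H - {?A, ?B}) + 2 = card (comps V H)"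
  proof -
    have c2: "card {?A,?B} = 2" using ne by simp
    have sub: "{?A,?B} \<subseteq> comps V H" using inA by simp
    have "card (comps V H - {?A, ?B}) = card (comps V H) - card {?A,?B}"
      using card_Diff_subset[OF _ sub] finite_subset[OF sub finite_comps[OF assms(1)]] by simp
    moreover have "card {?A,?B} \<le> card (comps V H)" using card_mono[OF finite_comps[OF assms(1)] sub] .
    ultimately show ?thesis using c2 by simp
  qed
  ultimately show ?thesis by simp
qed

definition forest :: "'v set \<Rightarrow> ('v \<times> 'v) set \<Rightarrow> bool" where
  "forest V H \<longleftrightarrow> card H + card (comps V H) = card V"

lemma comps_empty: "comps V {} = (\<lambda>v. {v}) ` V"
  unfolding comps_def comp_of_def by auto

lemma card_comps_empty: "card (comps V {}) = card V"
  unfolding comps_empty by (simp add: card_image inj_on_def)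

lemma forest_ineq:
  assumes "finite V" "H \<subseteq> V \<times> V"
  shows "card V \<le> card H + card (comps V H)"
proof -
  have "finite H" using assms finite_subset by blast
  then show ?thesis using assms(2)
  proof (induct H rule: finite_induct)
    case empty then show ?case by (simp add: card_comps_empty)
  next
    case (insert e H)
    obtain a b where e: "e = (a,b)" by force
    have ab: "a \<in> V" "b \<in> V" using insert e by auto
    have IH: "card V \<le> card H + card (comps V H)" using insert by auto
    show ?case
    proof (cases "(a,b) \<in> (RR H)\<^sup>*")
      case True
      then show ?thesis using comps_insert_conn[OF ab True] IH insert e by simp
    next
      case False
      then show ?thesis using card_comps_insert_nconn[OF assms(1) ab False] IH insert e by simp
    qed
  qed
qed

lemma forest_down:
  assumes "finite V" "insert (a,b) K \<subseteq> V \<times> V" "(a,b) \<notin> K" "forest V (insert (a,b) K)"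
  shows "forest V K \<and> (a,b) \<notin> (RR K)\<^sup>*"
proof -
  have ab: "a \<in> V" "b \<in> V" using assms by auto
  have fin: "finite K" using assms finite_subset[of K "V \<times> V"] by auto
  have I: "card V \<le> card K + card (comps V K)" using forest_ineq assms by auto
  have c: "card (insert (a,b) K) = card K + 1" using fin assms by simp
  show ?thesis
  proof (cases "(a,b) \<in> (RR K)\<^sup>*")
    case True
    then show ?thesis using comps_insert_conn[OF ab True] assms(4) c I by (simp add: forest_def)
  next
    case False
    then show ?thesis using card_comps_insert_nconn[OF assms(1) ab False] assms(4) c I by (simp add: forest_def)
  qed
qed

lemma forest_subset_aux:
  assumes "finite V" "finite D"
  shows "\<forall>K. K \<union> D \<subseteq> V \<times> V \<and> K \<inter> D = {} \<and> forest V (K \<union> D) \<longrightarrow> forest V K"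
  using assms(2)
proof (induct D rule: finite_induct)
  case empty then show ?case by simp
next
  case (insert x D)
  show ?case
  proof (intro allI impI)
    fix K assume h: "K \<union> insert x D \<subseteq> V \<times> V \<and> K \<inter> insert x D = {} \<and> forest V (K \<union> insert x D)"
    obtain a b where x: "x = (a,b)" by force
    have "forest V (K \<union> D)"
      using forest_down[OF assms(1), of a b "K \<union> D"] h insert x by auto
    then show "forest V K" using insert h by auto
  qed
qed

lemma forest_subset:
  assumes "finite V" "H \<subseteq> V \<times> V" "forest V H" "K \<subseteq> H"
  shows "forest V K"
proof -
  have fin: "finite (H - K)" using assms finite_subset[of H "V \<times> V"] by auto
  have e: "K \<union> (H - K) = H" using assms by auto
  have h: "K \<union> (H-K) \<subseteq> V \<times> V \<and> K \<inter> (H-K) = {} \<and> forest V (K \<union> (H-K))"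
    using assms e by auto
  have A: "\<forall>K'. K' \<union> (H-K) \<subseteq> V \<times> V \<and> K' \<inter> (H-K) = {} \<and> forest V (K' \<union> (H-K)) \<longrightarrow> forest V K'"
    by (rule forest_subset_aux[OF assms(1) fin])
  show ?thesis using A[THEN spec, of K] h by blast
qed

lemma dipath_card:
  assumes "is_dipath C F" "C \<noteq> {}"
  shows "card F + 1 = card C"
proof -
  obtain vs where vs: "distinct vs" "set vs = C" "F = set (zip vs (tl vs))"
    using assms(1) unfolding is_dipath_def by blast
  have d: "distinct (zip vs (tl vs))" by (rule distinct_zipI1) (rule vs(1))
  have "card F = length vs - 1" using vs(3) distinct_card[OF d] by simp
  moreover have "card C = length vs" using vs distinct_card by metis
  moreover have "vs \<noteq> []" using vs(2) assms(2) by auto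
  ultimately show ?thesis by (cases vs) auto
qed

lemma comp_of_sub: "comp_of V H v \<subseteq> V" by (auto simp: comp_of_def)

lemma comps_pairwise: assumes "C \<in> comps V H" "D \<in> comps V H" "C \<noteq> D" shows "C \<inter> D = {}"
proof (rule ccontr)
  assume "C \<inter> D \<noteq> {}"
  then obtain x where "x \<in> C" "x \<in> D" by blast
  then have "C = D" using comps_disj[OF assms(1,2)] by blast
  then show False using assms(3) by simp
qed

lemma mp_forest:
  assumes fin: "finite V" and EV: "E \<subseteq> V \<times> V" and H: "H \<in> multipaths V E"
  shows "forest V H"
proof -
  have HE: "H \<subseteq> E" and dp: "\<forall>C\<in>comps V H. is_dipath C (H \<inter> (C \<times> C))"
    using H unfolding multipaths_def by auto
  have HV: "H \<subseteq> V \<times> V" using HE EV by auto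
  have finC: "finite (comps V H)" using finite_comps[OF fin] .
  have HU: "H = (\<Union>C\<in>comps V H. H \<inter> (C \<times> C))"
  proof
    show "H \<subseteq> (\<Union>C\<in>comps V H. H \<inter> (C \<times> C))"
    proof
      fix e assume e: "e \<in> H"
      obtain x y where xy: "e = (x,y)" by force
      have xV: "x \<in> V" "y \<in> V" using e xy HV by auto
      have "(x,y) \<in> (RR H)\<^sup>*" using e xy by auto
      then have "y \<in> comp_of V H x" "x \<in> comp_of V H x" using xV by (auto simp: comp_of_def)
      moreover have "comp_of V H x \<in> comps V H" using xV by (simp add: comps_def)
      ultimately show "e \<in> (\<Union>C\<in>comps V H. H \<inter> (C \<times> C))" using e xy by blast
    qed
  qed auto
  have "card H = (\<Sum>C\<in>comps V H. card (H \<inter> (C \<times> C)))"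
  proof -
    have "card (\<Union>C\<in>comps V H. H \<inter> (C \<times> C)) = (\<Sum>C\<in>comps V H. card (H \<inter> (C \<times> C)))"
    proof (rule card_UN_disjoint[OF finC])
      have finH: "finite H" by (rule finite_subset[OF HV]) (simp add: fin)
      show "\<forall>C\<in>comps V H. finite (H \<inter> (C \<times> C))" by (simp add: finH)
      show "\<forall>i\<in>comps V H. \<forall>j\<in>comps V H. i \<noteq> j \<longrightarrow> H \<inter> (i \<times> i) \<inter> (H \<inter> (j \<times> j)) = {}"
      proof (intro ballI impI)
        fix i j assume ij: "i \<in> comps V H" "j \<in> comps V H" "i \<noteq> j"
        have "i \<inter> j = {}" by (rule comps_pairwise[OF ij])
        then show "H \<inter> (i \<times> i) \<inter> (H \<inter> (j \<times> j)) = {}" by auto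
      qed
    qed
    then show ?thesis using HU by simp
  qed
  moreover have "card V = (\<Sum>C\<in>comps V H. card C)"
  proof -
    have "\<Union>(comps V H) = V"
    proof
      show "\<Union>(comps V H) \<subseteq> V" by (auto simp: comps_def comp_of_def)
      show "V \<subseteq> \<Union>(comps V H)"
      proof
        fix v assume v: "v \<in> V"
        have "v \<in> comp_of V H v" using comp_of_self[OF v] .
        moreover have "comp_of V H v \<in> comps V H" using v by (simp add: comps_def)
        ultimately show "v \<in> \<Union>(comps V H)" by (rule UnionI[rotated])
      qed
    qed
    moreover have "card (\<Union>(comps V H)) = sum card (comps V H)"
    proof (rule card_Union_disjoint)
      show "pairwise disjnt (comps V H)" unfolding pairwise_def disjnt_def using comps_pairwise by blast
      show "\<And>A. A \<in> comps V H \<Longrightarrow> finite A" using fin by (auto simp: comps_def comp_of_def)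
    qed
    ultimately show ?thesis by simp
  qed
  moreover have "(\<Sum>C\<in>comps V H. card (H \<inter> (C \<times> C)) + 1) = (\<Sum>C\<in>comps V H. card C)"
  proof (rule sum.cong[OF refl])
    fix C assume C: "C \<in> comps V H"
    obtain v where v: "v \<in> V" "C = comp_of V H v" using C unfolding comps_def by auto
    have "C \<noteq> {}" using comp_of_self[OF v(1)] v(2) by auto
    then show "card (H \<inter> (C \<times> C)) + 1 = card C" using dipath_card[OF dp[rule_format, OF C]] by blast
  qed
  moreover have "(\<Sum>C\<in>comps V H. card (H \<inter> (C \<times> C)) + 1) = (\<Sum>C\<in>comps V H. card (H \<inter> (C \<times> C))) + card (comps V H)"
    using sum.distrib[of "\<lambda>C. card (H \<inter> (C \<times> C))" "\<lambda>C. 1" "comps V H"] by simp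
  ultimately show ?thesis unfolding forest_def by linarith
qed

section \<open>Representatives and ranks\<close>

definition rep :: "'v::linorder set \<Rightarrow> ('v \<times> 'v) set \<Rightarrow> 'v \<Rightarrow> 'v" where
  "rep V H v = Min (comp_of V H v)"

definition rk :: "'v::linorder set \<Rightarrow> 'v \<Rightarrow> nat" where
  "rk M x = card {m\<in>M. m < x}"

lemma comp_of_finite: "finite V \<Longrightarrow> finite (comp_of V H v)"
  by (rule finite_subset[OF comp_of_sub])

lemma rep_in: "finite V \<Longrightarrow> v \<in> V \<Longrightarrow> rep V H v \<in> comp_of V H v"
proof -
  assume fV: "finite V" and v: "v \<in> V"
  have "finite (comp_of V H v)" using comp_of_finite[OF fV] .
  moreover have "comp_of V H v \<noteq> {}" using comp_of_self[OF v, of H] by blast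
  ultimately show ?thesis unfolding rep_def by (rule Min_in)
qed

lemma rep_V: "finite V \<Longrightarrow> v \<in> V \<Longrightarrow> rep V H v \<in> V"
  using rep_in comp_of_sub by (metis subsetD)

lemma rep_eq_iff:
  assumes "finite V" "v \<in> V" "w \<in> V"
  shows "rep V H v = rep V H w \<longleftrightarrow> comp_of V H v = comp_of V H w"
proof
  assume h: "rep V H v = rep V H w"
  have "comp_of V H (rep V H v) = comp_of V H v" using comp_of_mem_eq[OF assms(2) rep_in[OF assms(1,2)]] .
  moreover have "comp_of V H (rep V H w) = comp_of V H w" using comp_of_mem_eq[OF assms(3) rep_in[OF assms(1,3)]] .
  ultimately show "comp_of V H v = comp_of V H w" using h by simp
qed (simp add: rep_def)

lemma comp_index_rk:
  assumes "finite V" "v \<in> V"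
  shows "comp_index V H v = rk (rep V H ` V) (rep V H v) + 1"
proof -
  have inj: "inj_on Min (comps V H)"
  proof (rule inj_onI)
    fix C D assume C: "C \<in> comps V H" and D: "D \<in> comps V H" and e: "Min C = Min D"
    obtain c where c: "c \<in> V" "C = comp_of V H c" using C unfolding comps_def by auto
    obtain d where d: "d \<in> V" "D = comp_of V H d" using D unfolding comps_def by auto
    have "rep V H c = rep V H d" using e c d by (simp add: rep_def)
    then show "C = D" using rep_eq_iff[OF assms(1) c(1) d(1)] c d by simp
  qed
  have s1: "{D \<in> comps V H. Min D < Min (comp_of V H v)} = comp_of V H ` {w\<in>V. rep V H w < rep V H v}"
    unfolding comps_def rep_def by blast
  have s2: "{m \<in> rep V H ` V. m < rep V H v} = rep V H ` {w\<in>V. rep V H w < rep V H v}"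
    by blast
  have s3: "image Min (image (comp_of V H) S0) = image (rep V H) S0" for S0
    unfolding rep_def image_image by simp
  have sub: "{D \<in> comps V H. Min D < Min (comp_of V H v)} \<subseteq> comps V H" by blast
  have "card {D \<in> comps V H. Min D < Min (comp_of V H v)} = card (Min ` {D \<in> comps V H. Min D < Min (comp_of V H v)})"
    using card_image[OF inj_on_subset[OF inj sub]] by simp
  also have "\<dots> = card {m \<in> rep V H ` V. m < rep V H v}"
    unfolding s1 s2 s3 ..
  finally have "card {D \<in> comps V H. Min D < Min (comp_of V H v)} = card {m \<in> rep V H ` V. m < rep V H v}" .
  then show ?thesis unfolding comp_index_def rk_def by simp
qed

lemma rk_mono:
  assumes "finite M" "x \<in> M" "x < y"
  shows "rk M x < rk M y"
proof -
  have "{m\<in>M. m < x} \<subset> {m\<in>M. m < y}" using assms by auto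
  moreover have "finite {m\<in>M. m < y}" using assms by auto
  ultimately show ?thesis unfolding rk_def using psubset_card_mono by blast
qed

lemma rk_remove:
  assumes "finite M" "u \<in> M"
  shows "int (rk (M - {u}) t) = int (rk M t) - (if u < t then 1 else 0)"
proof (cases "u < t")
  case True
  have "{m \<in> M - {u}. m < t} = {m\<in>M. m < t} - {u}" by auto
  moreover have "u \<in> {m\<in>M. m < t}" using True assms by auto
  moreover have "finite {m\<in>M. m < t}" using assms by auto
  ultimately have "card {m \<in> M - {u}. m < t} + 1 = card {m\<in>M. m < t}"
  proof -
    assume e: "{m \<in> M - {u}. m < t} = {m\<in>M. m < t} - {u}" and u: "u \<in> {m\<in>M. m < t}" and f: "finite {m\<in>M. m < t}"
    have "card ({m\<in>M. m < t} - {u}) = card {m\<in>M. m < t} - 1" by (rule card_Diff_singleton[OF u])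
    moreover have "card {m\<in>M. m < t} > 0" using f u card_gt_0_iff by blast
    ultimately show ?thesis using e by simp
  qed
  then show ?thesis using True unfolding rk_def by (simp add: \<open>card {m \<in> M - {u}. m < t} + 1 = card {m\<in>M. m < t}\<close>[symmetric])
next
  case False
  have "{m \<in> M - {u}. m < t} = {m\<in>M. m < t}" using False by auto
  then show ?thesis using False unfolding rk_def by simp
qed

definition ex1 :: "('a::linorder \<Rightarrow> int) \<Rightarrow> 'a \<Rightarrow> 'a \<Rightarrow> 'a \<Rightarrow> 'a \<Rightarrow> int" where
  "ex1 R x y z w = (let u = max x y; l = min x y;
      z' = (if z = x \<or> z = y then l else z); w' = (if w = x \<or> w = y then l else w)
    in R u + (if y < x then 1 else 0) + (R (max z' w') - (if u < max z' w' then 1 else 0)) + (if w' < z' then 1 else 0))"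

lemma ord3: fixes p q r :: "'a::linorder" shows "p<q \<Longrightarrow> q<r \<Longrightarrow> p<r \<and> \<not>q<p \<and> \<not>r<q \<and> \<not>r<p \<and> p\<le>q \<and> q\<le>r \<and> p\<le>r \<and> \<not>q\<le>p \<and> \<not>r\<le>q \<and> \<not>r\<le>p \<and> p\<noteq>q \<and> q\<noteq>r \<and> p\<noteq>r \<and> q\<noteq>p \<and> r\<noteq>q \<and> r\<noteq>p"
  by auto

lemma par_zx:
  fixes x y w :: "'a::linorder"
  assumes "x \<noteq> y" "x \<noteq> w" "y \<noteq> w"
  shows "odd (ex1 R x y x w + ex1 R x w x y)"
proof -
  consider "x < y" "y < w" | "x < w" "w < y" | "y < x" "x < w" | "y < w" "w < x" | "w < x" "x < y" | "w < y" "y < x"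
    using assms by (metis neqE less_trans)
  then show ?thesis
  proof cases
    case 1
    then show ?thesis using ord3[OF 1] by (simp add: ex1_def Let_def max_def min_def)
  next
    case 2
    then show ?thesis using ord3[OF 2] by (simp add: ex1_def Let_def max_def min_def)
  next
    case 3
    then show ?thesis using ord3[OF 3] by (simp add: ex1_def Let_def max_def min_def)
  next
    case 4
    then show ?thesis using ord3[OF 4] by (simp add: ex1_def Let_def max_def min_def)
  next
    case 5
    then show ?thesis using ord3[OF 5] by (simp add: ex1_def Let_def max_def min_def)
  next
    case 6
    then show ?thesis using ord3[OF 6] by (simp add: ex1_def Let_def max_def min_def)
  qed
qed

lemma par_wx:
  fixes x y w :: "'a::linorder"
  assumes "x \<noteq> y" "x \<noteq> w" "y \<noteq> w"
  shows "odd (ex1 R x y w x + ex1 R w x x y)"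
proof -
  consider "x < y" "y < w" | "x < w" "w < y" | "y < x" "x < w" | "y < w" "w < x" | "w < x" "x < y" | "w < y" "y < x"
    using assms by (metis neqE less_trans)
  then show ?thesis
  proof cases
    case 1
    then show ?thesis using ord3[OF 1] by (simp add: ex1_def Let_def max_def min_def)
  next
    case 2
    then show ?thesis using ord3[OF 2] by (simp add: ex1_def Let_def max_def min_def)
  next
    case 3
    then show ?thesis using ord3[OF 3] by (simp add: ex1_def Let_def max_def min_def)
  next
    case 4
    then show ?thesis using ord3[OF 4] by (simp add: ex1_def Let_def max_def min_def)
  next
    case 5
    then show ?thesis using ord3[OF 5] by (simp add: ex1_def Let_def max_def min_def)
  next
    case 6
    then show ?thesis using ord3[OF 6] by (simp add: ex1_def Let_def max_def min_def)
  qed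
qed

lemma par_zy:
  fixes x y w :: "'a::linorder"
  assumes "x \<noteq> y" "x \<noteq> w" "y \<noteq> w"
  shows "odd (ex1 R x y y w + ex1 R y w x y)"
proof -
  consider "x < y" "y < w" | "x < w" "w < y" | "y < x" "x < w" | "y < w" "w < x" | "w < x" "x < y" | "w < y" "y < x"
    using assms by (metis neqE less_trans)
  then show ?thesis
  proof cases
    case 1
    then show ?thesis using ord3[OF 1] by (simp add: ex1_def Let_def max_def min_def)
  next
    case 2
    then show ?thesis using ord3[OF 2] by (simp add: ex1_def Let_def max_def min_def)
  next
    case 3
    then show ?thesis using ord3[OF 3] by (simp add: ex1_def Let_def max_def min_def)
  next
    case 4
    then show ?thesis using ord3[OF 4] by (simp add: ex1_def Let_def max_def min_def)
  next
    case 5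
    then show ?thesis using ord3[OF 5] by (simp add: ex1_def Let_def max_def min_def)
  next
    case 6
    then show ?thesis using ord3[OF 6] by (simp add: ex1_def Let_def max_def min_def)
  qed
qed

lemma par_wy:
  fixes x y w :: "'a::linorder"
  assumes "x \<noteq> y" "x \<noteq> w" "y \<noteq> w"
  shows "odd (ex1 R x y w y + ex1 R w y x y)"
proof -
  consider "x < y" "y < w" | "x < w" "w < y" | "y < x" "x < w" | "y < w" "w < x" | "w < x" "x < y" | "w < y" "y < x"
    using assms by (metis neqE less_trans)
  then show ?thesis
  proof cases
    case 1
    then show ?thesis using ord3[OF 1] by (simp add: ex1_def Let_def max_def min_def)
  next
    case 2
    then show ?thesis using ord3[OF 2] by (simp add: ex1_def Let_def max_def min_def)
  next
    case 3
    then show ?thesis using ord3[OF 3] by (simp add: ex1_def Let_def max_def min_def)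
  next
    case 4
    then show ?thesis using ord3[OF 4] by (simp add: ex1_def Let_def max_def min_def)
  next
    case 5
    then show ?thesis using ord3[OF 5] by (simp add: ex1_def Let_def max_def min_def)
  next
    case 6
    then show ?thesis using ord3[OF 6] by (simp add: ex1_def Let_def max_def min_def)
  qed
qed

lemma par_disj:
  fixes x y z w :: "'a::linorder"
  assumes "x \<noteq> y" "z \<noteq> w" "z \<noteq> x" "z \<noteq> y" "w \<noteq> x" "w \<noteq> y"
  shows "odd (ex1 R x y z w + ex1 R z w x y)"
proof -
  have ne: "max x y \<noteq> max z w" using assms by (auto simp: max_def)
  have "ex1 R x y z w + ex1 R z w x y = 2 * (R (max x y) + R (max z w) + (if y < x then 1 else 0) + (if w < z then 1 else 0))
     - ((if max x y < max z w then 1 else 0) + (if max z w < max x y then 1 else 0))"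
    using assms by (simp add: ex1_def Let_def)
  moreover have gen: "\<And>a b::'a. a \<noteq> b \<Longrightarrow> (if a < b then 1 else 0) + (if b < a then 1 else (0::int)) = 1"
    by auto
  note gen[OF ne]
  ultimately show ?thesis by simp
qed

lemma parity:
  fixes x y z w :: "'a::linorder"
  assumes "x \<noteq> y" "z \<noteq> w" "{z,w} \<noteq> {x,y}"
  shows "odd (ex1 R x y z w + ex1 R z w x y)"
proof -
  consider "z = x" | "z = y" | "w = x" | "w = y" | "z \<noteq> x" "z \<noteq> y" "w \<noteq> x" "w \<noteq> y" by blast
  then show ?thesis
  proof cases
    case 1
    then have "w \<noteq> y" "w \<noteq> x" using assms by auto
    then show ?thesis using par_zx[of x y w R] assms 1 by auto
  next
    case 2
    then have "w \<noteq> x" "w \<noteq> y" using assms by auto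
    then show ?thesis using par_zy[of x y w R] assms 2 by auto
  next
    case 3
    then have "z \<noteq> y" "z \<noteq> x" using assms by auto
    then show ?thesis using par_wx[of x y z R] assms 3 by auto
  next
    case 4
    then have "z \<noteq> x" "z \<noteq> y" using assms by auto
    then show ?thesis using par_wy[of x y z R] assms 4 by auto
  next
    case 5
    then show ?thesis using par_disj[of x y z w R] assms by auto
  qed
qed


lemma rep_insert:
  assumes fV: "finite V" and ab: "a \<in> V" "b \<in> V" and nc: "(a,b) \<notin> (RR H)\<^sup>*" and v: "v \<in> V"
  shows "rep V (insert (a,b) H) v =
    (if rep V H v = rep V H a \<or> rep V H v = rep V H b then min (rep V H a) (rep V H b) else rep V H v)"
proof -
  have i1: "(v,a) \<in> (RR H)\<^sup>* \<longleftrightarrow> rep V H v = rep V H a"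
    using comp_of_eq_iff[OF v ab(1)] rep_eq_iff[OF fV v ab(1)] by simp
  have i2: "(v,b) \<in> (RR H)\<^sup>* \<longleftrightarrow> rep V H v = rep V H b"
    using comp_of_eq_iff[OF v ab(2)] rep_eq_iff[OF fV v ab(2)] by simp
  have ne: "comp_of V H a \<noteq> {}" "comp_of V H b \<noteq> {}"
    using comp_of_self[OF ab(1), of H] comp_of_self[OF ab(2), of H] by auto
  have fin: "finite (comp_of V H a)" "finite (comp_of V H b)" using comp_of_finite[OF fV] by auto
  have mu: "Min (comp_of V H a \<union> comp_of V H b) = min (rep V H a) (rep V H b)"
    unfolding rep_def using Min_Un[OF fin(1) ne(1) fin(2) ne(2)] .
  show ?thesis
    using comp_of_insert[OF v, of a b H] i1 i2 mu unfolding rep_def[of V "insert (a,b) H"]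
    by (simp add: rep_def)
qed

lemma rep_ne:
  assumes fV: "finite V" and ab: "a \<in> V" "b \<in> V" and nc: "(a,b) \<notin> (RR H)\<^sup>*"
  shows "rep V H a \<noteq> rep V H b"
  using comp_of_eq_iff[OF ab] rep_eq_iff[OF fV ab] nc by simp

lemma rep_img_insert:
  assumes fV: "finite V" and ab: "a \<in> V" "b \<in> V" and nc: "(a,b) \<notin> (RR H)\<^sup>*"
  shows "rep V (insert (a,b) H) ` V = rep V H ` V - {max (rep V H a) (rep V H b)}"
proof -
  let ?x = "rep V H a" and ?y = "rep V H b"
  have xy: "?x \<noteq> ?y" by (rule rep_ne[OF assms])
  have eq: "\<And>v. v \<in> V \<Longrightarrow> rep V (insert (a,b) H) v = (if rep V H v = ?x \<or> rep V H v = ?y then min ?x ?y else rep V H v)"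
    using rep_insert[OF assms] by blast
  show ?thesis
  proof
    show "rep V (insert (a,b) H) ` V \<subseteq> rep V H ` V - {max ?x ?y}"
    proof
      fix m assume "m \<in> rep V (insert (a,b) H) ` V"
      then obtain v where v: "v \<in> V" "m = rep V (insert (a,b) H) v" by blast
      show "m \<in> rep V H ` V - {max ?x ?y}"
      proof (cases "rep V H v = ?x \<or> rep V H v = ?y")
        case True
        then have "m = min ?x ?y" using eq[OF v(1)] v(2) by simp
        moreover have "min ?x ?y \<in> rep V H ` V" using ab by (auto simp: min_def)
        moreover have "min ?x ?y \<noteq> max ?x ?y" using xy by (auto simp: min_def max_def)
        ultimately show ?thesis by simp
      next
        case False
        then have "m = rep V H v" using eq[OF v(1)] v(2) by simp
        moreover have "rep V H v \<noteq> max ?x ?y" using False by (auto simp: max_def)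
        ultimately show ?thesis using v(1) by simp
      qed
    qed
  next
    show "rep V H ` V - {max ?x ?y} \<subseteq> rep V (insert (a,b) H) ` V"
    proof
      fix m assume m: "m \<in> rep V H ` V - {max ?x ?y}"
      then obtain v where v: "v \<in> V" "m = rep V H v" by blast
      show "m \<in> rep V (insert (a,b) H) ` V"
      proof (cases "rep V H v = ?x \<or> rep V H v = ?y")
        case True
        then have "m = min ?x ?y" using m v(2) by (auto simp: min_def max_def)
        then have "rep V (insert (a,b) H) v = m" using eq[OF v(1)] True by simp
        then show ?thesis using v(1) by (metis imageI)
      next
        case False
        then have "rep V (insert (a,b) H) v = m" using eq[OF v(1)] v(2) by simp
        then show ?thesis using v(1) by (metis imageI)
      qed
    qed
  qed
qed

definition EE :: "'v::linorder set \<Rightarrow> 'v \<Rightarrow> 'v \<Rightarrow> nat" where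
  "EE M x y = rk M (max x y) + (if y < x then 1 else 0)"

lemma eps_formula:
  assumes fV: "finite V" and ab: "a \<in> V" "b \<in> V" and ne: "rep V H a \<noteq> rep V H b"
  shows "eps V H (a,b) = (-1) ^ EE (rep V H ` V) (rep V H a) (rep V H b)"
proof -
  let ?M = "rep V H ` V" and ?x = "rep V H a" and ?y = "rep V H b"
  have fM: "finite ?M" using fV by simp
  have xM: "?x \<in> ?M" "?y \<in> ?M" using ab by auto
  have s: "sigma V H (a,b) = (let s = rk ?M ?x + 1; t = rk ?M ?y + 1 in if t > s then t + 1 else s)"
    unfolding sigma_def using comp_index_rk[OF fV ab(1), of H] comp_index_rk[OF fV ab(2), of H] by simp
  show ?thesis
  proof (cases "?x < ?y")
    case True
    have "rk ?M ?x < rk ?M ?y" by (rule rk_mono[OF fM xM(1) True])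
    then have "sigma V H (a,b) = rk ?M ?y + 2" using s by (simp add: Let_def)
    moreover have "EE ?M ?x ?y = rk ?M ?y"
    proof -
      have "\<not> ?y < ?x" "?x \<le> ?y" using True by auto
      then show ?thesis by (simp add: EE_def max_def)
    qed
    ultimately show ?thesis unfolding eps_def by simp
  next
    case False
    then have yx: "?y < ?x" using ne by simp
    have "rk ?M ?y < rk ?M ?x" by (rule rk_mono[OF fM xM(2) yx])
    then have "sigma V H (a,b) = rk ?M ?x + 1" using s by (simp add: Let_def)
    moreover have "EE ?M ?x ?y = rk ?M ?x + 1"
    proof -
      have "\<not> ?x \<le> ?y" using yx by auto
      then show ?thesis using yx by (simp add: EE_def max_def)
    qed
    ultimately show ?thesis unfolding eps_def by simp
  qed
qed

lemma pow_odd: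
  assumes "odd (n1 + n2)"
  shows "(-1::int) ^ n1 = - ((-1) ^ n2)"
  using assms by (cases "even n1") auto

lemma half_square:
  assumes fV: "finite V" and abcd: "a \<in> V" "b \<in> V" "c \<in> V" "d \<in> V"
    and nab: "(a,b) \<notin> (RR K)\<^sup>*" and ncd: "(c,d) \<notin> (RR (insert (a,b) K))\<^sup>*"
  shows "int (EE (rep V K ` V) (rep V K a) (rep V K b) + EE (rep V (insert (a,b) K) ` V) (rep V (insert (a,b) K) c) (rep V (insert (a,b) K) d))
         = ex1 (\<lambda>t. int (rk (rep V K ` V) t)) (rep V K a) (rep V K b) (rep V K c) (rep V K d)"
proof -
  let ?M = "rep V K ` V" and ?x = "rep V K a" and ?y = "rep V K b" and ?z = "rep V K c" and ?w = "rep V K d"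
  let ?u = "max ?x ?y"
  have fM: "finite ?M" using fV by simp
  have uM: "?u \<in> ?M" using abcd by (auto simp: max_def)
  have M1: "rep V (insert (a,b) K) ` V = ?M - {?u}" by (rule rep_img_insert[OF fV abcd(1,2) nab])
  have zc: "rep V (insert (a,b) K) c = (if ?z = ?x \<or> ?z = ?y then min ?x ?y else ?z)"
    by (rule rep_insert[OF fV abcd(1,2) nab abcd(3)])
  have wd: "rep V (insert (a,b) K) d = (if ?w = ?x \<or> ?w = ?y then min ?x ?y else ?w)"
    by (rule rep_insert[OF fV abcd(1,2) nab abcd(4)])
  have rr: "int (rk (?M - {?u}) t) = int (rk ?M t) - (if ?u < t then 1 else 0)" for t
    by (rule rk_remove[OF fM uM])
  show ?thesis
    unfolding EE_def ex1_def Let_def M1 zc wd using rr by simp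
qed

lemma eps_square:
  assumes fV: "finite V" and sub: "insert (a,b) (insert (c,d) K) \<subseteq> V \<times> V"
    and fo: "forest V (insert (a,b) (insert (c,d) K))"
    and n1: "(a,b) \<notin> K" and n2: "(c,d) \<notin> K" and n3: "(a,b) \<noteq> (c,d)"
  shows "eps V K (a,b) * eps V (insert (a,b) K) (c,d) = - (eps V K (c,d) * eps V (insert (c,d) K) (a,b))"
proof -
  have abcd: "a \<in> V" "b \<in> V" "c \<in> V" "d \<in> V" using sub by auto
  have A1: "forest V (insert (c,d) K) \<and> (a,b) \<notin> (RR (insert (c,d) K))\<^sup>*"
    by (rule forest_down[OF fV sub _ fo]) (use n1 n3 in auto)
  have A2: "forest V K \<and> (c,d) \<notin> (RR K)\<^sup>*"
    by (rule forest_down[OF fV _ n2 A1[THEN conjunct1]]) (use sub in auto)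
  have comm: "insert (a,b) (insert (c,d) K) = insert (c,d) (insert (a,b) K)" by auto
  have B1: "forest V (insert (a,b) K) \<and> (c,d) \<notin> (RR (insert (a,b) K))\<^sup>*"
    by (rule forest_down[OF fV _ _ fo[unfolded comm]]) (use sub n2 n3 in auto)
  have B2: "forest V K \<and> (a,b) \<notin> (RR K)\<^sup>*"
    by (rule forest_down[OF fV _ n1 B1[THEN conjunct1]]) (use sub in auto)
  let ?M = "rep V K ` V" and ?x = "rep V K a" and ?y = "rep V K b" and ?z = "rep V K c" and ?w = "rep V K d"
  have xy: "?x \<noteq> ?y" by (rule rep_ne[OF fV abcd(1,2) B2[THEN conjunct2]])
  have zw: "?z \<noteq> ?w" by (rule rep_ne[OF fV abcd(3,4) A2[THEN conjunct2]])
  have set_ne: "{?z, ?w} \<noteq> {?x, ?y}"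
  proof
    assume h: "{?z, ?w} = {?x, ?y}"
    have ca: "(c,a) \<in> (RR K)\<^sup>* \<longleftrightarrow> ?z = ?x" using comp_of_eq_iff[OF abcd(3,1)] rep_eq_iff[OF fV abcd(3,1)] by simp
    have cb: "(c,b) \<in> (RR K)\<^sup>* \<longleftrightarrow> ?z = ?y" using comp_of_eq_iff[OF abcd(3,2)] rep_eq_iff[OF fV abcd(3,2)] by simp
    have bd: "(b,d) \<in> (RR K)\<^sup>* \<longleftrightarrow> ?y = ?w" using comp_of_eq_iff[OF abcd(2,4)] rep_eq_iff[OF fV abcd(2,4)] by simp
    have ad: "(a,d) \<in> (RR K)\<^sup>* \<longleftrightarrow> ?x = ?w" using comp_of_eq_iff[OF abcd(1,4)] rep_eq_iff[OF fV abcd(1,4)] by simp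
    from h zw have "(?z = ?x \<and> ?w = ?y) \<or> (?z = ?y \<and> ?w = ?x)" by (auto simp: doubleton_eq_iff)
    then have "(c,d) \<in> (RR (insert (a,b) K))\<^sup>*"
      using reach_insert[of c d a b K] ca cb bd ad by auto
    then show False using B1 by simp
  qed
  have cd1: "rep V (insert (a,b) K) c \<noteq> rep V (insert (a,b) K) d"
    by (rule rep_ne[OF fV abcd(3,4) B1[THEN conjunct2]])
  have ab1: "rep V (insert (c,d) K) a \<noteq> rep V (insert (c,d) K) b"
    by (rule rep_ne[OF fV abcd(1,2) A1[THEN conjunct2]])
  have e1: "eps V K (a,b) * eps V (insert (a,b) K) (c,d) = (-1) ^ (EE ?M ?x ?y + EE (rep V (insert (a,b) K) ` V) (rep V (insert (a,b) K) c) (rep V (insert (a,b) K) d))"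
    using eps_formula[OF fV abcd(1,2) xy] eps_formula[OF fV abcd(3,4) cd1] by (simp add: power_add)
  have e2: "eps V K (c,d) * eps V (insert (c,d) K) (a,b) = (-1) ^ (EE ?M ?z ?w + EE (rep V (insert (c,d) K) ` V) (rep V (insert (c,d) K) a) (rep V (insert (c,d) K) b))"
    using eps_formula[OF fV abcd(3,4) zw] eps_formula[OF fV abcd(1,2) ab1] by (simp add: power_add)
  note h1 = half_square[OF fV abcd(1,2,3,4) B2[THEN conjunct2] B1[THEN conjunct2]]
  note h2 = half_square[OF fV abcd(3,4,1,2) A2[THEN conjunct2] A1[THEN conjunct2]]
  have od: "odd (ex1 (\<lambda>t. int (rk ?M t)) ?x ?y ?z ?w + ex1 (\<lambda>t. int (rk ?M t)) ?z ?w ?x ?y)"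
    by (rule parity[OF xy zw set_ne])
  have "odd ((EE ?M ?x ?y + EE (rep V (insert (a,b) K) ` V) (rep V (insert (a,b) K) c) (rep V (insert (a,b) K) d))
     + (EE ?M ?z ?w + EE (rep V (insert (c,d) K) ` V) (rep V (insert (c,d) K) a) (rep V (insert (c,d) K) b)))"
  proof -
    have "odd (int (EE ?M ?x ?y + EE (rep V (insert (a,b) K) ` V) (rep V (insert (a,b) K) c) (rep V (insert (a,b) K) d))
      + int (EE ?M ?z ?w + EE (rep V (insert (c,d) K) ` V) (rep V (insert (c,d) K) a) (rep V (insert (c,d) K) b)))"
      using od h1 h2 by simp
    then show ?thesis by (metis of_nat_add even_of_nat)
  qed
  then show ?thesis using e1 e2 pow_odd by metis
qed

lemma zip_map_tl: "set (zip (map h vs) (tl (map h vs))) = map_prod h h ` set (zip vs (tl vs))"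
  by (simp add: map_tl[symmetric] zip_map_map map_prod_def)

lemma zip_tl_sub: "set (zip vs (tl vs)) \<subseteq> set vs \<times> set vs"
  by (cases vs) (auto dest: set_zip_leftD set_zip_rightD)

lemma dipath_map_fwd:
  assumes inj: "inj_on h Dom" and C: "C \<subseteq> Dom" and dp: "is_dipath C F"
  shows "is_dipath (h ` C) (map_prod h h ` F)"
proof -
  obtain vs where vs: "distinct vs" "set vs = C" "F = set (zip vs (tl vs))"
    using dp unfolding is_dipath_def by blast
  have "distinct (map h vs)" using vs inj C by (simp add: distinct_map inj_on_subset)
  moreover have "set (map h vs) = h ` C" using vs by simp
  moreover have "map_prod h h ` F = set (zip (map h vs) (tl (map h vs)))"
    using vs(3) zip_map_tl by metis
  ultimately show ?thesis unfolding is_dipath_def by blast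
qed

lemma dipath_map_bwd:
  assumes inj: "inj_on h Dom" and C: "C \<subseteq> Dom" and FX: "F \<subseteq> Dom \<times> Dom"
    and dp: "is_dipath (h ` C) (map_prod h h ` F)"
  shows "is_dipath C F"
proof -
  obtain ws where ws: "distinct ws" "set ws = h ` C" "map_prod h h ` F = set (zip ws (tl ws))"
    using dp unfolding is_dipath_def by blast
  define vs where "vs = map (inv_into Dom h) ws"
  have mv: "map h vs = ws"
    unfolding vs_def using ws(2) C by (auto intro!: map_idI f_inv_into_f[of _ h Dom] imageI)
  have svs: "set vs = C" unfolding vs_def using ws(2) inj C by simp
  have dvs: "distinct vs" using ws(1) mv by (metis distinct_map)
  have "is_dipath C (set (zip vs (tl vs)))" unfolding is_dipath_def using svs dvs by blast
  then have "is_dipath (h ` C) (map_prod h h ` set (zip vs (tl vs)))" by (rule dipath_map_fwd[OF inj C])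
  have e: "map_prod h h ` set (zip vs (tl vs)) = set (zip ws (tl ws))"
    using mv zip_map_tl by metis
  have injP: "inj_on (map_prod h h) (Dom \<times> Dom)" by (rule map_prod_inj_on[OF inj inj])
  have sub2: "set (zip vs (tl vs)) \<subseteq> Dom \<times> Dom"
    using zip_tl_sub[of vs] svs C by blast
  have "F = set (zip vs (tl vs))"
    using inj_on_image_eq_iff[OF injP FX sub2] ws(3) e by simp
  then show ?thesis unfolding is_dipath_def using svs dvs by blast
qed

lemma RR_map: "RR (map_prod h h ` K) = map_prod h h ` RR K"
  by auto

lemma reach_map_bwd:
  assumes "(v,w) \<in> (RR K)\<^sup>*"
  shows "(h v, h w) \<in> (RR (map_prod h h ` K))\<^sup>*"
  using assms
proof (induct rule: rtrancl_induct)
  case base then show ?case by simp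
next
  case (step y z)
  have "(h y, h z) \<in> RR (map_prod h h ` K)" using step(2) by force
  then show ?case using step(3) by (rule rtrancl_into_rtrancl[rotated])
qed

lemma reach_map_fwd:
  assumes inj: "inj_on h Dom" and KX: "K \<subseteq> Dom \<times> Dom" and v: "v \<in> Dom"
    and r: "(h v, u) \<in> (RR (map_prod h h ` K))\<^sup>*"
  shows "\<exists>w. u = h w \<and> (v,w) \<in> (RR K)\<^sup>*"
  using r
proof (induct rule: rtrancl_induct)
  case base then show ?case by blast
next
  case (step y z)
  obtain w where w: "y = h w" "(v,w) \<in> (RR K)\<^sup>*" using step(3) by blast
  have wX: "w \<in> Dom" by (rule reach_in_V[OF _ w(2) v]) (use KX in auto)
  from step(2) consider "(y,z) \<in> map_prod h h ` K" | "(z,y) \<in> map_prod h h ` K" by auto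
  then show ?case
  proof cases
    case 1
    then obtain p q where pq: "(p,q) \<in> K" "y = h p" "z = h q" by auto
    have "p \<in> Dom" using pq KX by auto
    then have "p = w" using inj wX pq(2) w(1) by (simp add: inj_on_def)
    then have "(v,q) \<in> (RR K)\<^sup>*" using w(2) pq(1) by (meson UnI1 rtrancl.rtrancl_into_rtrancl)
    then show ?thesis using pq(3) by blast
  next
    case 2
    then obtain p q where pq: "(p,q) \<in> K" "z = h p" "y = h q" by auto
    have "q \<in> Dom" using pq KX by auto
    then have "q = w" using inj wX pq(3) w(1) by (simp add: inj_on_def)
    then have "(v,p) \<in> (RR K)\<^sup>*" using w(2) pq(1) by (meson UnI2 converseI rtrancl.rtrancl_into_rtrancl)
    then show ?thesis using pq(2) by blast
  qed
qed

lemma comp_map: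
  assumes inj: "inj_on h Dom" and KX: "K \<subseteq> Dom \<times> Dom" and v: "v \<in> Dom" and hX: "h ` Dom \<subseteq> Y"
  shows "comp_of Y (map_prod h h ` K) (h v) = h ` comp_of Dom K v"
proof
  show "comp_of Y (map_prod h h ` K) (h v) \<subseteq> h ` comp_of Dom K v"
  proof
    fix u assume "u \<in> comp_of Y (map_prod h h ` K) (h v)"
    then have "(h v, u) \<in> (RR (map_prod h h ` K))\<^sup>*" by (simp add: comp_of_def)
    then obtain w where w: "u = h w" "(v,w) \<in> (RR K)\<^sup>*" using reach_map_fwd[OF inj KX v] by blast
    have "w \<in> Dom" by (rule reach_in_V[OF KX w(2) v])
    then show "u \<in> h ` comp_of Dom K v" using w by (auto simp: comp_of_def)
  qed
next
  show "h ` comp_of Dom K v \<subseteq> comp_of Y (map_prod h h ` K) (h v)"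
  proof
    fix u assume "u \<in> h ` comp_of Dom K v"
    then obtain w where w: "u = h w" "w \<in> Dom" "(v,w) \<in> (RR K)\<^sup>*" by (auto simp: comp_of_def)
    then show "u \<in> comp_of Y (map_prod h h ` K) (h v)"
      using reach_map_bwd[OF w(3), of h] hX by (auto simp: comp_of_def)
  qed
qed

lemma comp_outside:
  assumes KX: "K \<subseteq> Dom \<times> Dom" and u: "u \<in> Y" "u \<notin> h ` Dom"
  shows "comp_of Y (map_prod h h ` K) u = {u}"
proof -
  have "x = u" if "(u,x) \<in> (RR (map_prod h h ` K))\<^sup>*" for x
    using that
  proof (induct rule: rtrancl_induct)
    case base then show ?case by simp
  next
    case (step y z)
    then have "(u,z) \<in> RR (map_prod h h ` K)" by simp
    then have "u \<in> h ` Dom" using KX by auto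
    then show ?case using u by simp
  qed
  then show ?thesis using u by (auto simp: comp_of_def)
qed

lemma restr_map:
  assumes inj: "inj_on h Dom" and KX: "K \<subseteq> Dom \<times> Dom" and C: "C \<subseteq> Dom"
  shows "map_prod h h ` K \<inter> (h ` C \<times> h ` C) = map_prod h h ` (K \<inter> (C \<times> C))"
proof
  show "map_prod h h ` K \<inter> (h ` C \<times> h ` C) \<subseteq> map_prod h h ` (K \<inter> (C \<times> C))"
  proof
    fix e assume e: "e \<in> map_prod h h ` K \<inter> (h ` C \<times> h ` C)"
    then obtain p q where pq: "(p,q) \<in> K" "e = (h p, h q)" by auto
    obtain p' q' where pq': "p' \<in> C" "q' \<in> C" "e = (h p', h q')" using e by auto
    have "p = p'" "q = q'" using pq pq' KX C inj unfolding inj_on_def by auto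
    then show "e \<in> map_prod h h ` (K \<inter> (C \<times> C))" using pq pq' by auto
  qed
qed auto

lemma mp_map:
  assumes d1: "digraph V1 E1" and d2: "digraph V2 E2" and reg: "regular_morphism V2 E2 V1 E1 \<phi>"
    and KE: "K \<subseteq> E2"
  shows "K \<in> multipaths V2 E2 \<longleftrightarrow> map_prod \<phi> \<phi> ` K \<in> multipaths V1 E1"
proof -
  have inj: "inj_on \<phi> V2" and img: "\<phi> ` V2 \<subseteq> V1" and ed: "\<forall>(a,b)\<in>E2. (\<phi> a, \<phi> b) \<in> E1"
    using reg unfolding regular_morphism_def by auto
  have E2V: "E2 \<subseteq> V2 \<times> V2" using d2 unfolding digraph_def by auto
  have KX: "K \<subseteq> V2 \<times> V2" using KE E2V by auto
  have KE1: "map_prod \<phi> \<phi> ` K \<subseteq> E1" using KE ed by auto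
  show ?thesis
  proof
    assume K: "K \<in> multipaths V2 E2"
    have dp: "\<forall>C\<in>comps V2 K. is_dipath C (K \<inter> (C \<times> C))" using K unfolding multipaths_def by auto
    have "is_dipath C (map_prod \<phi> \<phi> ` K \<inter> (C \<times> C))" if C: "C \<in> comps V1 (map_prod \<phi> \<phi> ` K)" for C
    proof -
      obtain u where u: "u \<in> V1" "C = comp_of V1 (map_prod \<phi> \<phi> ` K) u" using C unfolding comps_def by auto
      show ?thesis
      proof (cases "u \<in> \<phi> ` V2")
        case True
        then obtain v where v: "v \<in> V2" "u = \<phi> v" by auto
        let ?C2 = "comp_of V2 K v"
        have CC: "C = \<phi> ` ?C2" using comp_map[OF inj KX v(1) img] u v by simp
        have C2: "?C2 \<in> comps V2 K" using v by (simp add: comps_def)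
        have sub: "?C2 \<subseteq> V2" by (rule comp_of_sub)
        have "is_dipath (\<phi> ` ?C2) (map_prod \<phi> \<phi> ` (K \<inter> (?C2 \<times> ?C2)))"
          by (rule dipath_map_fwd[OF inj sub]) (use dp C2 in blast)
        then show ?thesis using CC restr_map[OF inj KX sub] by simp
      next
        case False
        have "C = {u}" using comp_outside[OF KX u(1) False] u by simp
        moreover have "map_prod \<phi> \<phi> ` K \<inter> ({u} \<times> {u}) = {}" using False KX by auto
        moreover have "is_dipath {u} {}" unfolding is_dipath_def by (rule exI[of _ "[u]"]) simp
        ultimately show ?thesis by simp
      qed
    qed
    then show "map_prod \<phi> \<phi> ` K \<in> multipaths V1 E1" using KE1 unfolding multipaths_def by blast
  next
    assume K1: "map_prod \<phi> \<phi> ` K \<in> multipaths V1 E1"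
    have dp: "\<forall>C\<in>comps V1 (map_prod \<phi> \<phi> ` K). is_dipath C (map_prod \<phi> \<phi> ` K \<inter> (C \<times> C))"
      using K1 unfolding multipaths_def by auto
    have "is_dipath C (K \<inter> (C \<times> C))" if C: "C \<in> comps V2 K" for C
    proof -
      obtain v where v: "v \<in> V2" "C = comp_of V2 K v" using C unfolding comps_def by auto
      have sub: "C \<subseteq> V2" using v comp_of_sub by simp
      have CC: "comp_of V1 (map_prod \<phi> \<phi> ` K) (\<phi> v) = \<phi> ` C" using comp_map[OF inj KX v(1) img] v by simp
      have "\<phi> ` C \<in> comps V1 (map_prod \<phi> \<phi> ` K)" using CC v img unfolding comps_def by (metis image_eqI image_subset_iff)
      then have "is_dipath (\<phi> ` C) (map_prod \<phi> \<phi> ` K \<inter> (\<phi> ` C \<times> \<phi> ` C))" using dp by blast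
      then have "is_dipath (\<phi> ` C) (map_prod \<phi> \<phi> ` (K \<inter> (C \<times> C)))" using restr_map[OF inj KX sub] by simp
      moreover have FX: "K \<inter> (C \<times> C) \<subseteq> V2 \<times> V2" using KX by auto
      ultimately show ?thesis using dipath_map_bwd[OF inj sub FX] by blast
    qed
    then show "K \<in> multipaths V2 E2" using KE unfolding multipaths_def by blast
  qed
qed

lemma card_map:
  assumes inj: "inj_on \<phi> V2" and KX: "K \<subseteq> V2 \<times> V2"
  shows "card (map_prod \<phi> \<phi> ` K) = card K"
  using card_image[OF inj_on_subset[OF map_prod_inj_on[OF inj inj] KX]] .

lemma mpn_map:
  assumes d1: "digraph V1 E1" and d2: "digraph V2 E2" and reg: "regular_morphism V2 E2 V1 E1 \<phi>"
    and KE: "K \<subseteq> E2"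
  shows "K \<in> multipaths_n V2 E2 n \<longleftrightarrow> map_prod \<phi> \<phi> ` K \<in> multipaths_n V1 E1 n"
proof -
  have inj: "inj_on \<phi> V2" using reg unfolding regular_morphism_def by auto
  have KX: "K \<subseteq> V2 \<times> V2" using KE d2 unfolding digraph_def by auto
  show ?thesis using mp_map[OF assms] card_map[OF inj KX] unfolding multipaths_n_def by auto
qed

definition cp :: "('e set \<Rightarrow> 'e \<Rightarrow> int) \<Rightarrow> 'e list \<Rightarrow> int" where
  "cp \<rho> es = (\<Prod>i<length es. \<rho> (set (take i es)) (es ! i))"

lemma cp_Nil: "cp \<rho> [] = 1" by (simp add: cp_def)

lemma cp_snoc: "cp \<rho> (xs @ [x]) = cp \<rho> xs * \<rho> (set xs) x"
proof -
  have "cp \<rho> (xs @ [x]) = (\<Prod>i<Suc (length xs). \<rho> (set (take i (xs @ [x]))) ((xs @ [x]) ! i))"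
    by (simp add: cp_def)
  also have "\<dots> = (\<Prod>i<length xs. \<rho> (set (take i (xs @ [x]))) ((xs @ [x]) ! i)) * \<rho> (set xs) x"
    by (simp add: prod.lessThan_Suc)
  also have "(\<Prod>i<length xs. \<rho> (set (take i (xs @ [x]))) ((xs @ [x]) ! i)) = cp \<rho> xs"
    unfolding cp_def by (rule prod.cong) (auto simp: nth_append)
  finally show ?thesis .
qed

lemma cp_indep_aux:
  assumes sq: "\<And>T e e'. T \<subseteq> S \<Longrightarrow> e \<in> S \<Longrightarrow> e' \<in> S \<Longrightarrow> e \<notin> T \<Longrightarrow> e' \<notin> T \<Longrightarrow> e \<noteq> e' \<Longrightarrow>
      \<rho> T e * \<rho> (insert e T) e' = \<rho> T e' * \<rho> (insert e' T) e"
  shows "\<forall>es es'. length es = n \<longrightarrow> distinct es \<longrightarrow> distinct es' \<longrightarrow> set es = set es' \<longrightarrow> set es \<subseteq> S \<longrightarrow> cp \<rho> es = cp \<rho> es'"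
proof (induct n)
  case 0 then show ?case by simp
next
  case (Suc n)
  show ?case
  proof (intro allI impI)
    fix es es' :: "'a list"
    assume l: "length es = Suc n" and d: "distinct es" and d': "distinct es'" and s: "set es = set es'" and sS: "set es \<subseteq> S"
    obtain xs x where es: "es = xs @ [x]" using l by (cases es rule: rev_exhaust) auto
    have "es' \<noteq> []" using s es by auto
    then obtain ys y where es': "es' = ys @ [y]" by (cases es' rule: rev_exhaust) auto
    have lxs: "length xs = n" using l es by simp
    have lys: "length ys = n"
    proof -
      have "length es' = length es" using distinct_card[OF d] distinct_card[OF d'] s by simp
      then show ?thesis using l es' by simp
    qed
    have dx: "distinct xs" "x \<notin> set xs" using d es by auto
    have dy: "distinct ys" "y \<notin> set ys" using d' es' by auto
    show "cp \<rho> es = cp \<rho> es'"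
    proof (cases "x = y")
      case True
      then have "set xs = set ys" using s es es' dx dy by auto
      then have "cp \<rho> xs = cp \<rho> ys"
        by (intro Suc[rule_format, of xs ys] lxs dx(1) dy(1)) (use sS es in auto)
      then show ?thesis using es es' True \<open>set xs = set ys\<close> by (simp add: cp_snoc)
    next
      case False
      have yx: "y \<in> set xs" using s es es' False by auto
      have xy: "x \<in> set ys" using s es es' False by auto
      define T where "T = set xs - {y}"
      have fT: "finite T" unfolding T_def by simp
      obtain zs where zs: "set zs = T" "distinct zs" using finite_distinct_list[OF fT] by blast
      have TS: "T \<subseteq> S" using sS es T_def by auto
      have xS: "x \<in> S" "y \<in> S" using sS es yx by auto
      have xT: "x \<notin> T" "y \<notin> T" using dx T_def by auto
      have sx: "set xs = insert y T" using yx T_def by auto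
      have sy: "set ys = insert x T"
      proof -
        have "set ys = set es' - {y}" using es' dy by auto
        also have "\<dots> = set es - {y}" using s by simp
        also have "\<dots> = insert x T" using es T_def False by auto
        finally show ?thesis .
      qed
      have c1: "cp \<rho> xs = cp \<rho> (zs @ [y])"
        by (intro Suc[rule_format, of xs "zs @ [y]"] lxs dx(1)) (use zs xT sx sS es in auto)
      have c2: "cp \<rho> ys = cp \<rho> (zs @ [x])"
        by (intro Suc[rule_format, of ys "zs @ [x]"] lys dy(1)) (use zs xT sy TS xS in auto)
      have "cp \<rho> es = cp \<rho> zs * (\<rho> T y * \<rho> (insert y T) x)"
        using es c1 zs sx by (simp add: cp_snoc)
      also have "\<rho> T y * \<rho> (insert y T) x = \<rho> T x * \<rho> (insert x T) y"
        using sq[OF TS xS(2) xS(1) xT(2) xT(1)] False by simp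
      also have "cp \<rho> zs * (\<rho> T x * \<rho> (insert x T) y) = cp \<rho> es'"
        using es' c2 zs sy by (simp add: cp_snoc)
      finally show ?thesis .
    qed
  qed
qed

lemma cp_indep:
  assumes sq: "\<And>T e e'. T \<subseteq> S \<Longrightarrow> e \<in> S \<Longrightarrow> e' \<in> S \<Longrightarrow> e \<notin> T \<Longrightarrow> e' \<notin> T \<Longrightarrow> e \<noteq> e' \<Longrightarrow>
      \<rho> T e * \<rho> (insert e T) e' = \<rho> T e' * \<rho> (insert e' T) e"
    and "distinct es" "distinct es'" "set es = set es'" "set es \<subseteq> S"
  shows "cp \<rho> es = cp \<rho> es'"
  using cp_indep_aux[OF sq, where n="length es"] assms(2-) by blast

definition rho :: "'v::linorder set \<Rightarrow> 'w::linorder set \<Rightarrow> ('w \<Rightarrow> 'v) \<Rightarrow> ('w \<times> 'w) set \<Rightarrow> ('w \<times> 'w) \<Rightarrow> int" where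
  "rho V V' \<phi> T e = eps V (map_prod \<phi> \<phi> ` T) (map_prod \<phi> \<phi> e) * eps V' T e"

lemma gauge_cp: "gauge V V' \<phi> H = cp (rho V V' \<phi>) (sorted_list_of_set H)"
  unfolding gauge_def cp_def rho_def Let_def ..

lemma eps_sq: "eps V H e * eps V H e = 1"
  unfolding eps_def by (simp flip: power_mult_distrib)

lemma eps_square':
  assumes "finite V" "insert e (insert e' K) \<subseteq> V \<times> V" "forest V (insert e (insert e' K))"
    "e \<notin> K" "e' \<notin> K" "e \<noteq> e'"
  shows "eps V K e * eps V (insert e K) e' = - (eps V K e' * eps V (insert e' K) e)"
proof -
  obtain a b where ab: "e = (a,b)" by force
  obtain c d where cd: "e' = (c,d)" by force
  show ?thesis unfolding ab cd by (rule eps_square[OF assms[unfolded ab cd]])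
qed

lemma sq_combine:
  fixes a1 b1 c1 d1 a2 b2 c2 d2 :: int
  assumes "a1 * b1 = -(c1 * d1)" "a2 * b2 = -(c2 * d2)"
  shows "(a1 * a2) * (b1 * b2) = (c1 * c2) * (d1 * d2)"
proof -
  have "(a1 * a2) * (b1 * b2) = (a1 * b1) * (a2 * b2)" by (simp add: ac_simps)
  also have "\<dots> = (c1 * d1) * (c2 * d2)" using assms by simp
  also have "\<dots> = (c1 * c2) * (d1 * d2)" by (simp add: ac_simps)
  finally show ?thesis .
qed

lemma rho_sq:
  assumes d1: "digraph V1 E1" and d2: "digraph V2 E2" and reg: "regular_morphism V2 E2 V1 E1 \<phi>"
    and H: "H \<in> multipaths V2 E2"
    and T: "T \<subseteq> H" and e: "e \<in> H" "e' \<in> H" "e \<notin> T" "e' \<notin> T" "e \<noteq> e'"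
  shows "rho V1 V2 \<phi> T e * rho V1 V2 \<phi> (insert e T) e' = rho V1 V2 \<phi> T e' * rho V1 V2 \<phi> (insert e' T) e"
proof -
  have fV1: "finite V1" and E1V: "E1 \<subseteq> V1 \<times> V1" using d1 unfolding digraph_def by auto
  have fV2: "finite V2" and E2V: "E2 \<subseteq> V2 \<times> V2" using d2 unfolding digraph_def by auto
  have inj: "inj_on \<phi> V2" using reg unfolding regular_morphism_def by auto
  have HE: "H \<subseteq> E2" using H unfolding multipaths_def by auto
  have HV: "H \<subseteq> V2 \<times> V2" using HE E2V by auto
  let ?P = "map_prod \<phi> \<phi>"
  have injP: "inj_on ?P (V2 \<times> V2)" by (rule map_prod_inj_on[OF inj inj])
  have H1: "?P ` H \<in> multipaths V1 E1" using mp_map[OF d1 d2 reg HE, THEN iffD1, OF H] .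
  have H1V: "?P ` H \<subseteq> V1 \<times> V1" using H1 E1V unfolding multipaths_def by auto
  have sub2: "insert e (insert e' T) \<subseteq> H" using T e by auto
  have fo2: "forest V2 (insert e (insert e' T))"
    by (rule forest_subset[OF fV2 HV mp_forest[OF fV2 E2V H] sub2])
  have sq2: "eps V2 T e * eps V2 (insert e T) e' = - (eps V2 T e' * eps V2 (insert e' T) e)"
    by (rule eps_square'[OF fV2 _ fo2 e(3,4,5)]) (rule subset_trans[OF sub2 HV])
  have sub1: "insert (?P e) (insert (?P e') (?P ` T)) \<subseteq> ?P ` H" using T e by auto
  have fo1: "forest V1 (insert (?P e) (insert (?P e') (?P ` T)))"
    by (rule forest_subset[OF fV1 H1V mp_forest[OF fV1 E1V H1] sub1])
  have TV: "T \<subseteq> V2 \<times> V2" using T HV by auto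
  have eV: "e \<in> V2 \<times> V2" "e' \<in> V2 \<times> V2" using e HV by auto
  have nin1: "?P e \<notin> ?P ` T" using inj_on_image_mem_iff[OF injP eV(1) TV] e(3) by simp
  have nin2: "?P e' \<notin> ?P ` T" using inj_on_image_mem_iff[OF injP eV(2) TV] e(4) by simp
  have nin3: "?P e \<noteq> ?P e'"
  proof
    assume "?P e = ?P e'"
    then have "e = e'" by (rule inj_onD[OF injP _ eV(1) eV(2)])
    then show False using e(5) by simp
  qed
  have sq1: "eps V1 (?P ` T) (?P e) * eps V1 (insert (?P e) (?P ` T)) (?P e') = - (eps V1 (?P ` T) (?P e') * eps V1 (insert (?P e') (?P ` T)) (?P e))"
    by (rule eps_square'[OF fV1 _ fo1 nin1 nin2 nin3]) (rule subset_trans[OF sub1 H1V])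
  show ?thesis
    unfolding rho_def image_insert by (rule sq_combine[OF sq1 sq2])
qed

lemma rh_add: "ring_homomorphism f \<Longrightarrow> f (x + y) = f x + f y"
  unfolding ring_homomorphism_def by blast
lemma rh_mult: "ring_homomorphism f \<Longrightarrow> f (x * y) = f x * f y"
  unfolding ring_homomorphism_def by blast
lemma rh_one: "ring_homomorphism f \<Longrightarrow> f 1 = 1"
  unfolding ring_homomorphism_def by blast

lemma rh_zero: assumes "ring_homomorphism f" shows "f 0 = 0"
proof -
  have "f (0 + 0) = f 0 + f 0" by (rule rh_add[OF assms])
  then show ?thesis by simp
qed

lemma rh_neg: assumes "ring_homomorphism f" shows "f (- x) = - f x"
proof -
  have "f (x + - x) = f x + f (- x)" by (rule rh_add[OF assms])
  then have "0 = f x + f (- x)" using rh_zero[OF assms] by simp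
  then show ?thesis by (simp add: eq_neg_iff_add_eq_0 add.commute)
qed

lemma rh_of_nat: assumes "ring_homomorphism f" shows "f (of_nat n) = of_nat n"
proof (induct n)
  case 0 then show ?case using rh_zero[OF assms] by simp
next
  case (Suc n)
  have "f (of_nat (Suc n)) = f (1 + of_nat n)" by simp
  also have "\<dots> = f 1 + f (of_nat n)" by (rule rh_add[OF assms])
  finally show ?case using Suc rh_one[OF assms] by simp
qed

lemma rh_of_int: assumes "ring_homomorphism f" shows "f (of_int k) = of_int k"
proof (cases k rule: int_cases)
  case (nonneg n) then show ?thesis using rh_of_nat[OF assms, of n] by simp
next
  case (neg n) then show ?thesis using rh_of_nat[OF assms, of "Suc n"] rh_neg[OF assms, of "of_nat (Suc n)"]
    by simp
qed

lemma rh_sum: assumes "ring_homomorphism f" shows "f (sum g A) = (\<Sum>x\<in>A. f (g x))"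
proof (cases "finite A")
  case True then show ?thesis
    by (induct A rule: finite_induct) (simp_all add: rh_zero[OF assms] rh_add[OF assms])
next
  case False then show ?thesis using rh_zero[OF assms] by simp
qed

lemma rh_comp: "ring_homomorphism f \<Longrightarrow> ring_homomorphism g \<Longrightarrow> ring_homomorphism (g \<circ> f)"
  unfolding ring_homomorphism_def by simp

lemma rh_id: "ring_homomorphism id"
  unfolding ring_homomorphism_def by simp

lemma reg_comp:
  assumes "regular_morphism V2 E2 V1 E1 \<phi>" "regular_morphism V3 E3 V2 E2 \<psi>"
  shows "regular_morphism V3 E3 V1 E1 (\<phi> \<circ> \<psi>)"
proof -
  have i1: "inj_on \<phi> V2" "\<phi> ` V2 \<subseteq> V1" "\<forall>(a, b) \<in> E2. (\<phi> a, \<phi> b) \<in> E1"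
    using assms(1) unfolding regular_morphism_def by auto
  have i2: "inj_on \<psi> V3" "\<psi> ` V3 \<subseteq> V2" "\<forall>(a, b) \<in> E3. (\<psi> a, \<psi> b) \<in> E2"
    using assms(2) unfolding regular_morphism_def by auto
  have "inj_on (\<phi> \<circ> \<psi>) V3" by (rule comp_inj_on[OF i2(1) inj_on_subset[OF i1(1) i2(2)]])
  moreover have "(\<phi> \<circ> \<psi>) ` V3 \<subseteq> V1" using i1(2) i2(2) by (auto simp: image_subset_iff)
  moreover have "\<forall>(a, b) \<in> E3. ((\<phi> \<circ> \<psi>) a, (\<phi> \<circ> \<psi>) b) \<in> E1" using i1(3) i2(3) by auto
  ultimately show ?thesis unfolding regular_morphism_def by blast
qed

lemma reg_id:
  shows "regular_morphism V E V E id"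
  unfolding regular_morphism_def by auto

section \<open>Gauge lemmas\<close>

lemma mp_finite:
  assumes d: "digraph V E" and H: "H \<in> multipaths V E"
  shows "finite H"
proof -
  have "H \<subseteq> V \<times> V" using H d unfolding multipaths_def digraph_def by auto
  moreover have "finite (V \<times> V)" using d unfolding digraph_def by simp
  ultimately show ?thesis by (rule finite_subset)
qed

lemma gauge_step:
  assumes d1: "digraph V1 E1" and d2: "digraph V2 E2" and reg: "regular_morphism V2 E2 V1 E1 \<phi>"
    and H: "H \<in> multipaths V2 E2" and e: "e \<in> H"
  shows "gauge V1 V2 \<phi> H = gauge V1 V2 \<phi> (H - {e}) * rho V1 V2 \<phi> (H - {e}) e"
proof -
  have fH: "finite H" by (rule mp_finite[OF d2 H])
  have fH': "finite (H - {e})" using fH by simp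
  let ?es = "sorted_list_of_set H" and ?es' = "sorted_list_of_set (H - {e}) @ [e]"
  have "cp (rho V1 V2 \<phi>) ?es = cp (rho V1 V2 \<phi>) ?es'"
  proof (rule cp_indep[where S = H])
    show "\<And>T e e'. T \<subseteq> H \<Longrightarrow> e \<in> H \<Longrightarrow> e' \<in> H \<Longrightarrow> e \<notin> T \<Longrightarrow> e' \<notin> T \<Longrightarrow> e \<noteq> e' \<Longrightarrow>
      rho V1 V2 \<phi> T e * rho V1 V2 \<phi> (insert e T) e' = rho V1 V2 \<phi> T e' * rho V1 V2 \<phi> (insert e' T) e"
      by (rule rho_sq[OF d1 d2 reg H])
    show "distinct ?es" by simp
    show "distinct ?es'" using fH' by simp
    show "set ?es = set ?es'" using fH fH' e by auto
    show "set ?es \<subseteq> H" using fH by simp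
  qed
  then show ?thesis unfolding gauge_cp using fH' by (simp add: cp_snoc)
qed

lemma gauge_id: "gauge V V id H = 1"
proof -
  have "map_prod id id = (id :: 'a \<times> 'a \<Rightarrow> 'a \<times> 'a)" by (simp add: id_def)
  then show ?thesis unfolding gauge_def Let_def
    by (intro prod.neutral ballI) (simp only: image_id id_apply eps_sq)
qed

lemma gauge_comp:
  assumes d1: "digraph V1 E1" and d2: "digraph V2 E2" and d3: "digraph V3 E3"
    and r1: "regular_morphism V2 E2 V1 E1 \<phi>" and r2: "regular_morphism V3 E3 V2 E2 \<psi>"
    and H: "H \<in> multipaths V3 E3"
  shows "gauge V1 V3 (\<phi> \<circ> \<psi>) H = gauge V1 V2 \<phi> (map_prod \<psi> \<psi> ` H) * gauge V2 V3 \<psi> H"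
proof -
  let ?P = "map_prod \<phi> \<phi>" and ?Q = "map_prod \<psi> \<psi>"
  let ?es = "sorted_list_of_set H"
  have fH: "finite H" by (rule mp_finite[OF d3 H])
  have HE: "H \<subseteq> E3" using H unfolding multipaths_def by auto
  have HV: "H \<subseteq> V3 \<times> V3" using HE d3 unfolding digraph_def by auto
  have inj: "inj_on \<psi> V3" using r2 unfolding regular_morphism_def by auto
  have injQ: "inj_on ?Q H" using map_prod_inj_on[OF inj inj] HV by (rule inj_on_subset)
  have QH: "?Q ` H \<in> multipaths V2 E2" using mp_map[OF d2 d3 r2 HE, THEN iffD1, OF H] .
  have fQH: "finite (?Q ` H)" using fH by simp
  have "gauge V1 V2 \<phi> (?Q ` H) = cp (rho V1 V2 \<phi>) (map ?Q ?es)"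
    unfolding gauge_cp
  proof (rule cp_indep[where S = \<open>?Q ` H\<close>])
    show "\<And>T e e'. T \<subseteq> ?Q ` H \<Longrightarrow> e \<in> ?Q ` H \<Longrightarrow> e' \<in> ?Q ` H \<Longrightarrow> e \<notin> T \<Longrightarrow> e' \<notin> T \<Longrightarrow> e \<noteq> e' \<Longrightarrow>
      rho V1 V2 \<phi> T e * rho V1 V2 \<phi> (insert e T) e' = rho V1 V2 \<phi> T e' * rho V1 V2 \<phi> (insert e' T) e"
      by (rule rho_sq[OF d1 d2 r1 QH])
    show "distinct (sorted_list_of_set (?Q ` H))" by simp
    show "distinct (map ?Q ?es)" using injQ fH by (simp add: distinct_map)
    show "set (sorted_list_of_set (?Q ` H)) = set (map ?Q ?es)" using fH fQH by simp
    show "set (sorted_list_of_set (?Q ` H)) \<subseteq> ?Q ` H" using fQH by simp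
  qed
  also have "\<dots> = (\<Prod>i<length ?es. rho V1 V2 \<phi> (?Q ` set (take i ?es)) (?Q (?es ! i)))"
    unfolding cp_def by (rule prod.cong) (simp_all add: take_map)
  finally have g12: "gauge V1 V2 \<phi> (?Q ` H) = (\<Prod>i<length ?es. rho V1 V2 \<phi> (?Q ` set (take i ?es)) (?Q (?es ! i)))" .
  have g23: "gauge V2 V3 \<psi> H = (\<Prod>i<length ?es. rho V2 V3 \<psi> (set (take i ?es)) (?es ! i))"
    unfolding gauge_cp cp_def ..
  have g13: "gauge V1 V3 (\<phi> \<circ> \<psi>) H = (\<Prod>i<length ?es. rho V1 V3 (\<phi> \<circ> \<psi>) (set (take i ?es)) (?es ! i))"
    unfolding gauge_cp cp_def ..
  have trm: "rho V1 V3 (\<phi> \<circ> \<psi>) T e = rho V1 V2 \<phi> (?Q ` T) (?Q e) * rho V2 V3 \<psi> T e" for T e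
  proof -
    have a: "map_prod (\<phi> \<circ> \<psi>) (\<phi> \<circ> \<psi>) ` T = ?P ` ?Q ` T" by (simp add: map_prod_compose image_comp)
    have b: "map_prod (\<phi> \<circ> \<psi>) (\<phi> \<circ> \<psi>) e = ?P (?Q e)" by (simp add: map_prod_compose)
    have c: "eps V2 (?Q ` T) (?Q e) * eps V2 (?Q ` T) (?Q e) = 1" by (rule eps_sq)
    have gen: "\<And>A B C :: int. B * B = 1 \<Longrightarrow> A * C = (A * B) * (B * C)"
    proof -
      fix A B C :: int assume h: "B * B = 1"
      have "(A * B) * (B * C) = A * (B * B) * C" by (simp add: ac_simps)
      then show "A * C = (A * B) * (B * C)" using h by simp
    qed
    show ?thesis unfolding rho_def a b by (rule gen[OF c])
  qed
  show ?thesis unfolding g12 g23 g13 trm by (simp add: prod.distrib)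
qed

section \<open>Pull-back\<close>

lemma pull_add:
  assumes "ring_homomorphism f"
  shows "pull V V' E' n \<phi> f (\<lambda>H. x H + y H) = (\<lambda>H. pull V V' E' n \<phi> f x H + pull V V' E' n \<phi> f y H)"
  unfolding pull_def by (rule ext) (simp add: rh_add[OF assms] distrib_left)

lemma pull_zero:
  assumes "ring_homomorphism f"
  shows "pull V V' E' n \<phi> f (\<lambda>H. 0) = (\<lambda>H. 0)"
  unfolding pull_def by (rule ext) (simp add: rh_zero[OF assms])

lemma pull_cochain: "pull V V' E' n \<phi> f c \<in> cochains V' E' n"
  unfolding pull_def cochains_def by auto

lemma cochain_zero: "c \<in> cochains V E n \<Longrightarrow> H \<notin> multipaths_n V E n \<Longrightarrow> c H = 0"
  unfolding cochains_def by blast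

lemma pull_val:
  assumes d1: "digraph V1 E1" and d2: "digraph V2 E2" and reg: "regular_morphism V2 E2 V1 E1 \<phi>"
    and f: "ring_homomorphism f" and c: "c \<in> cochains V1 E1 m" and KE: "K \<subseteq> E2"
  shows "pull V1 V2 E2 m \<phi> f c K = of_int (gauge V1 V2 \<phi> K) * f (c (map_prod \<phi> \<phi> ` K))"
proof (cases "K \<in> multipaths_n V2 E2 m")
  case True then show ?thesis unfolding pull_def by simp
next
  case False
  then have "map_prod \<phi> \<phi> ` K \<notin> multipaths_n V1 E1 m" using mpn_map[OF d1 d2 reg KE] by simp
  then have "c (map_prod \<phi> \<phi> ` K) = 0" by (rule cochain_zero[OF c])
  then show ?thesis unfolding pull_def using False rh_zero[OF f] by simp
qed

lemma pull_dmap: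
  assumes d1: "digraph V1 E1" and d2: "digraph V2 E2" and reg: "regular_morphism V2 E2 V1 E1 \<phi>"
    and f: "ring_homomorphism f" and c: "c \<in> cochains V1 E1 m"
  shows "pull V1 V2 E2 (Suc m) \<phi> f (dmap V1 E1 m c) = dmap V2 E2 m (pull V1 V2 E2 m \<phi> f c)"
proof (rule ext)
  fix H
  let ?P = "map_prod \<phi> \<phi>"
  show "pull V1 V2 E2 (Suc m) \<phi> f (dmap V1 E1 m c) H = dmap V2 E2 m (pull V1 V2 E2 m \<phi> f c) H"
  proof (cases "H \<in> multipaths_n V2 E2 (Suc m)")
    case False then show ?thesis unfolding pull_def dmap_def by simp
  next
    case True
    have Hmp: "H \<in> multipaths V2 E2" using True unfolding multipaths_n_def by simp
    have HE: "H \<subseteq> E2" using Hmp unfolding multipaths_def by auto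
    have HV: "H \<subseteq> V2 \<times> V2" using HE d2 unfolding digraph_def by auto
    have inj: "inj_on \<phi> V2" using reg unfolding regular_morphism_def by auto
    have injP: "inj_on ?P H" using map_prod_inj_on[OF inj inj] HV by (rule inj_on_subset)
    have PH: "?P ` H \<in> multipaths_n V1 E1 (Suc m)" using mpn_map[OF d1 d2 reg HE] True by simp
    have dif: "?P ` H - {?P e} = ?P ` (H - {e})" if "e \<in> H" for e
      using injP that by (simp add: inj_on_image_set_diff)
    have "dmap V1 E1 m c (?P ` H) = (\<Sum>e\<in>?P ` H. of_int (eps V1 (?P ` H - {e}) e) * c (?P ` H - {e}))"
      unfolding dmap_def using PH by simp
    also have "\<dots> = (\<Sum>e\<in>H. of_int (eps V1 (?P ` H - {?P e}) (?P e)) * c (?P ` H - {?P e}))"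
      by (rule sum.reindex_cong[OF injP refl]) simp
    also have "\<dots> = (\<Sum>e\<in>H. of_int (eps V1 (?P ` (H - {e})) (?P e)) * c (?P ` (H - {e})))"
      by (rule sum.cong[OF refl]) (simp add: dif)
    finally have dm: "dmap V1 E1 m c (?P ` H) = (\<Sum>e\<in>H. of_int (eps V1 (?P ` (H - {e})) (?P e)) * c (?P ` (H - {e})))" .
    have "pull V1 V2 E2 (Suc m) \<phi> f (dmap V1 E1 m c) H = of_int (gauge V1 V2 \<phi> H) * f (dmap V1 E1 m c (?P ` H))"
      unfolding pull_def using True by simp
    also have "\<dots> = (\<Sum>e\<in>H. of_int (gauge V1 V2 \<phi> H) * (of_int (eps V1 (?P ` (H - {e})) (?P e)) * f (c (?P ` (H - {e})))))"
      unfolding dm rh_sum[OF f] by (simp add: rh_mult[OF f] rh_of_int[OF f] sum_distrib_left)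
    also have "\<dots> = (\<Sum>e\<in>H. of_int (eps V2 (H - {e}) e) * pull V1 V2 E2 m \<phi> f c (H - {e}))"
    proof (rule sum.cong[OF refl])
      fix e assume e: "e \<in> H"
      have g: "gauge V1 V2 \<phi> H = gauge V1 V2 \<phi> (H - {e}) * rho V1 V2 \<phi> (H - {e}) e"
        by (rule gauge_step[OF d1 d2 reg Hmp e])
      have sq: "eps V1 (?P ` (H - {e})) (?P e) * eps V1 (?P ` (H - {e})) (?P e) = 1" by (rule eps_sq)
      have gi: "gauge V1 V2 \<phi> H * eps V1 (?P ` (H - {e})) (?P e) = eps V2 (H - {e}) e * gauge V1 V2 \<phi> (H - {e})"
      proof -
        have "gauge V1 V2 \<phi> H * eps V1 (?P ` (H - {e})) (?P e)
          = gauge V1 V2 \<phi> (H - {e}) * (eps V1 (?P ` (H - {e})) (?P e) * eps V1 (?P ` (H - {e})) (?P e)) * eps V2 (H - {e}) e"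
          unfolding g rho_def by (simp add: ac_simps)
        then show ?thesis using sq by simp
      qed
      have pv: "pull V1 V2 E2 m \<phi> f c (H - {e}) = of_int (gauge V1 V2 \<phi> (H - {e})) * f (c (?P ` (H - {e})))"
        by (rule pull_val[OF d1 d2 reg f c]) (use HE in auto)
      have "of_int (gauge V1 V2 \<phi> H) * (of_int (eps V1 (?P ` (H - {e})) (?P e)) * f (c (?P ` (H - {e}))))
          = of_int (gauge V1 V2 \<phi> H * eps V1 (?P ` (H - {e})) (?P e)) * f (c (?P ` (H - {e})))"
        by (simp add: mult.assoc)
      also have "\<dots> = of_int (eps V2 (H - {e}) e * gauge V1 V2 \<phi> (H - {e})) * f (c (?P ` (H - {e})))"
        unfolding gi ..
      also have "\<dots> = of_int (eps V2 (H - {e}) e) * pull V1 V2 E2 m \<phi> f c (H - {e})"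
        unfolding pv by (simp add: mult.assoc)
      finally show "of_int (gauge V1 V2 \<phi> H) * (of_int (eps V1 (?P ` (H - {e})) (?P e)) * f (c (?P ` (H - {e}))))
          = of_int (eps V2 (H - {e}) e) * pull V1 V2 E2 m \<phi> f c (H - {e})" .
    qed
    also have "\<dots> = dmap V2 E2 m (pull V1 V2 E2 m \<phi> f c) H"
      unfolding dmap_def using True by simp
    finally show ?thesis .
  qed
qed

definition addsub :: "('x \<Rightarrow> 'r::comm_ring_1) set \<Rightarrow> bool" where
  "addsub S \<longleftrightarrow> (\<lambda>H. 0) \<in> S \<and> (\<forall>x\<in>S. \<forall>y\<in>S. (\<lambda>H. x H + y H) \<in> S) \<and> (\<forall>x\<in>S. (\<lambda>H. - x H) \<in> S)"

definition rc :: "('x \<Rightarrow> 'r::comm_ring_1) set \<Rightarrow> ('x \<Rightarrow> 'r) \<Rightarrow> ('x \<Rightarrow> 'r) set" where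
  "rc B x = (\<lambda>b. \<lambda>H. b H + x H) ` B"

lemma addsub_addI: "addsub B \<Longrightarrow> x \<in> B \<Longrightarrow> y \<in> B \<Longrightarrow> (\<lambda>H. x H + y H) \<in> B"
  unfolding addsub_def by blast

lemma addsub_negI: "addsub B \<Longrightarrow> x \<in> B \<Longrightarrow> (\<lambda>H. - x H) \<in> B"
  unfolding addsub_def by blast

lemma addsub_zeroI: "addsub B \<Longrightarrow> (\<lambda>H. 0) \<in> B"
  unfolding addsub_def by blast

lemma dmap_add: "dmap V E n (\<lambda>H. x H + y H) = (\<lambda>H. dmap V E n x H + dmap V E n y H)"
  unfolding dmap_def by (rule ext) (simp add: sum.distrib distrib_left)

lemma dmap_neg: "dmap V E n (\<lambda>H. - x H) = (\<lambda>H. - dmap V E n x H)"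
  unfolding dmap_def by (rule ext) (simp add: sum_negf)

lemma dmap_zero: "dmap V E n (\<lambda>H. 0) = (\<lambda>H. 0)"
  unfolding dmap_def by (rule ext) simp

lemma addsub_cochains: "addsub (cochains V E n)"
  unfolding addsub_def cochains_def
proof (intro conjI ballI; clarsimp)
  fix x y :: "('a \<times> 'a) set \<Rightarrow> 'b" and H
  assume x: "\<forall>H. x H \<noteq> 0 \<longrightarrow> H \<in> multipaths_n V E n" and y: "\<forall>H. y H \<noteq> 0 \<longrightarrow> H \<in> multipaths_n V E n"
    and s: "x H + y H \<noteq> 0"
  show "H \<in> multipaths_n V E n"
  proof (cases "x H = 0")
    case True then show ?thesis using s y by simp
  next
    case False then show ?thesis using x by simp
  qed
qed

lemma addsub_cocycles:
  fixes V :: "'v::linorder set"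
  shows "addsub (cocycles V E n :: (('v \<times> 'v) set \<Rightarrow> 'r::comm_ring_1) set)"
proof -
  have c: "addsub (cochains V E n :: (('v \<times> 'v) set \<Rightarrow> 'r) set)" by (rule addsub_cochains)
  show ?thesis unfolding addsub_def
  proof (intro conjI ballI)
    show "(\<lambda>H. 0) \<in> (cocycles V E n :: (('v \<times> 'v) set \<Rightarrow> 'r) set)" using c unfolding addsub_def cocycles_def by (simp add: dmap_zero)
  next
    fix x y assume "x \<in> (cocycles V E n :: (('v \<times> 'v) set \<Rightarrow> 'r) set)" "y \<in> (cocycles V E n :: (('v \<times> 'v) set \<Rightarrow> 'r) set)"
    then show "(\<lambda>H. x H + y H) \<in> (cocycles V E n :: (('v \<times> 'v) set \<Rightarrow> 'r) set)" using c unfolding addsub_def cocycles_def by (simp add: dmap_add)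
  next
    fix x assume "x \<in> (cocycles V E n :: (('v \<times> 'v) set \<Rightarrow> 'r) set)"
    then show "(\<lambda>H. - x H) \<in> (cocycles V E n :: (('v \<times> 'v) set \<Rightarrow> 'r) set)" using c unfolding addsub_def cocycles_def by (simp add: dmap_neg)
  qed
qed

lemma addsub_coboundaries:
  fixes V :: "'v::linorder set"
  shows "addsub (coboundaries V E n :: (('v \<times> 'v) set \<Rightarrow> 'r::comm_ring_1) set)"
proof (cases n)
  case 0 then show ?thesis unfolding addsub_def by simp
next
  case (Suc m)
  have c: "addsub (cochains V E m :: (('v \<times> 'v) set \<Rightarrow> 'r) set)" by (rule addsub_cochains)
  show ?thesis unfolding Suc coboundaries.simps addsub_def
  proof (intro conjI ballI)
    have "(\<lambda>H. 0) \<in> (cochains V E m :: (('v \<times> 'v) set \<Rightarrow> 'r) set)" using c unfolding addsub_def by blast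
    then show "(\<lambda>H. 0) \<in> dmap V E m ` (cochains V E m :: (('v \<times> 'v) set \<Rightarrow> 'r) set)"
      by (rule rev_image_eqI) (simp add: dmap_zero)
  next
    fix x y assume "x \<in> dmap V E m ` (cochains V E m :: (('v \<times> 'v) set \<Rightarrow> 'r) set)" "y \<in> dmap V E m ` (cochains V E m :: (('v \<times> 'v) set \<Rightarrow> 'r) set)"
    then obtain x0 y0 where xy: "x0 \<in> (cochains V E m :: (('v \<times> 'v) set \<Rightarrow> 'r) set)" "y0 \<in> (cochains V E m :: (('v \<times> 'v) set \<Rightarrow> 'r) set)" "x = dmap V E m x0" "y = dmap V E m y0" by blast
    have "(\<lambda>H. x0 H + y0 H) \<in> (cochains V E m :: (('v \<times> 'v) set \<Rightarrow> 'r) set)" using c xy unfolding addsub_def by blast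
    then show "(\<lambda>H. x H + y H) \<in> dmap V E m ` (cochains V E m :: (('v \<times> 'v) set \<Rightarrow> 'r) set)"
      unfolding xy(3,4) by (rule rev_image_eqI) (simp add: dmap_add)
  next
    fix x assume "x \<in> dmap V E m ` (cochains V E m :: (('v \<times> 'v) set \<Rightarrow> 'r) set)"
    then obtain x0 where xx: "x0 \<in> (cochains V E m :: (('v \<times> 'v) set \<Rightarrow> 'r) set)" "x = dmap V E m x0" by blast
    have "(\<lambda>H. - x0 H) \<in> (cochains V E m :: (('v \<times> 'v) set \<Rightarrow> 'r) set)" using c xx unfolding addsub_def by blast
    then show "(\<lambda>H. - x H) \<in> dmap V E m ` (cochains V E m :: (('v \<times> 'v) set \<Rightarrow> 'r) set)"
      unfolding xx(2) by (rule rev_image_eqI) (simp add: dmap_neg)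
  qed
qed

lemma rc_memI: "b \<in> B \<Longrightarrow> z = (\<lambda>H. b H + x H) \<Longrightarrow> z \<in> rc B x"
  unfolding rc_def by blast

lemma rcoset_eq0: "r_coset (cochain_grp V E n) B x = rc B x"
  unfolding r_coset_def rc_def cochain_grp_def by auto

lemma setmult_eq0: "set_mult (cochain_grp V E n) P Q = (\<Union>p\<in>P. \<Union>q\<in>Q. {\<lambda>H. p H + q H})"
  unfolding set_mult_def cochain_grp_def by simp

lemma rcoset_eq: "r_coset (cochain_grp V E n\<lparr>carrier := Z\<rparr>) B x = rc B x"
  unfolding r_coset_def rc_def cochain_grp_def by auto

lemma setmult_eq: "set_mult (cochain_grp V E n\<lparr>carrier := Z\<rparr>) P Q = (\<Union>p\<in>P. \<Union>q\<in>Q. {\<lambda>H. p H + q H})"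
  unfolding set_mult_def cochain_grp_def by simp

lemma carrier_cohom: "carrier (mp_cohom V E n) = rc (coboundaries V E n) ` cocycles V E n"
  unfolding mp_cohom_def FactGroup_def RCOSETS_def by (auto simp: rcoset_eq rcoset_eq0)

lemma mult_cohom: "monoid.mult (mp_cohom V E n) P Q = (\<Union>p\<in>P. \<Union>q\<in>Q. {\<lambda>H. p H + q H})"
  unfolding mp_cohom_def FactGroup_def by (simp add: setmult_eq setmult_eq0)

lemma one_cohom: "monoid.one (mp_cohom V E n) = coboundaries V E n"
  unfolding mp_cohom_def FactGroup_def by simp

lemma rc_mult:
  assumes B: "addsub B"
  shows "(\<Union>p\<in>rc B x. \<Union>q\<in>rc B y. {\<lambda>H. p H + q H}) = rc B (\<lambda>H. x H + y H)"
proof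
  show "(\<Union>p\<in>rc B x. \<Union>q\<in>rc B y. {\<lambda>H. p H + q H}) \<subseteq> rc B (\<lambda>H. x H + y H)"
  proof (intro subsetI)
    fix z assume "z \<in> (\<Union>p\<in>rc B x. \<Union>q\<in>rc B y. {\<lambda>H. p H + q H})"
    then obtain b1 b2 where b: "b1 \<in> B" "b2 \<in> B" "z = (\<lambda>H. (b1 H + x H) + (b2 H + y H))"
      unfolding rc_def by blast
    have "(\<lambda>H. b1 H + b2 H) \<in> B" using B b unfolding addsub_def by blast
    moreover have "z = (\<lambda>H. (b1 H + b2 H) + (x H + y H))" using b(3) by (simp add: ac_simps)
    ultimately show "z \<in> rc B (\<lambda>H. x H + y H)" by (rule rc_memI)
  qed
next
  show "rc B (\<lambda>H. x H + y H) \<subseteq> (\<Union>p\<in>rc B x. \<Union>q\<in>rc B y. {\<lambda>H. p H + q H})"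
  proof (intro subsetI)
    fix z assume "z \<in> rc B (\<lambda>H. x H + y H)"
    then obtain b where b: "b \<in> B" "z = (\<lambda>H. b H + (x H + y H))" unfolding rc_def by blast
    have z0: "(\<lambda>H. 0) \<in> B" using B unfolding addsub_def by blast
    have "(\<lambda>H. b H + x H) \<in> rc B x" using b(1) by (rule rc_memI) simp
    moreover have "(\<lambda>H. 0 + y H) \<in> rc B y" using z0 by (rule rc_memI) simp
    moreover have "z = (\<lambda>H. (b H + x H) + (0 + y H))" using b(2) by (simp add: ac_simps)
    ultimately show "z \<in> (\<Union>p\<in>rc B x. \<Union>q\<in>rc B y. {\<lambda>H. p H + q H})" by blast
  qed
qed

lemma rc_absorb:
  assumes B: "addsub B" and b0: "b0 \<in> B"
  shows "rc B (\<lambda>H. b0 H + x H) = rc B x"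
proof
  show "rc B (\<lambda>H. b0 H + x H) \<subseteq> rc B x"
  proof
    fix z assume "z \<in> rc B (\<lambda>H. b0 H + x H)"
    then obtain b where b: "b \<in> B" "z = (\<lambda>H. b H + (b0 H + x H))" unfolding rc_def by blast
    have "(\<lambda>H. b H + b0 H) \<in> B" using B b b0 unfolding addsub_def by blast
    moreover have "z = (\<lambda>H. (b H + b0 H) + x H)" using b(2) by (simp add: ac_simps)
    ultimately show "z \<in> rc B x" by (rule rc_memI)
  qed
next
  show "rc B x \<subseteq> rc B (\<lambda>H. b0 H + x H)"
  proof
    fix z assume "z \<in> rc B x"
    then obtain b where b: "b \<in> B" "z = (\<lambda>H. b H + x H)" unfolding rc_def by blast
    have nb0: "(\<lambda>H. - b0 H) \<in> B" using B b0 unfolding addsub_def by blast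
    have "(\<lambda>H. b H + - b0 H) \<in> B" using addsub_addI[OF B b(1) nb0] by simp
    moreover have "z = (\<lambda>H. (b H + - b0 H) + (b0 H + x H))" using b(2) by (simp add: ac_simps)
    ultimately show "z \<in> rc B (\<lambda>H. b0 H + x H)" by (rule rc_memI)
  qed
qed

lemma rc_zero:
  assumes B: "addsub B"
  shows "rc B (\<lambda>H. 0) = B"
  unfolding rc_def by simp

lemma comm_group_cohom:
  fixes V :: "'v::linorder set"
  shows "comm_group (mp_cohom V E n :: (('v \<times> 'v) set \<Rightarrow> 'r::comm_ring_1) set monoid)"
proof -
  let ?G = "mp_cohom V E n :: (('v \<times> 'v) set \<Rightarrow> 'r) set monoid"
  let ?B = "coboundaries V E n :: (('v \<times> 'v) set \<Rightarrow> 'r) set" and ?Z = "cocycles V E n :: (('v \<times> 'v) set \<Rightarrow> 'r) set"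
  have B: "addsub ?B" by (rule addsub_coboundaries)
  have Z: "addsub ?Z" by (rule addsub_cocycles)
  have mm: "\<And>x y. rc ?B x \<otimes>\<^bsub>?G\<^esub> rc ?B y = rc ?B (\<lambda>H. x H + y H)"
    unfolding mult_cohom by (rule rc_mult[OF B])
  have car: "carrier ?G = rc ?B ` ?Z" by (rule carrier_cohom)
  have one: "\<one>\<^bsub>?G\<^esub> = rc ?B (\<lambda>H. 0)" unfolding one_cohom rc_zero[OF B] ..
  show ?thesis
  proof (rule comm_groupI)
    fix P Q assume "P \<in> carrier ?G" "Q \<in> carrier ?G"
    then obtain x y where xy: "x \<in> ?Z" "y \<in> ?Z" "P = rc ?B x" "Q = rc ?B y" unfolding car by blast
    have "(\<lambda>H. x H + y H) \<in> ?Z" by (rule addsub_addI[OF Z xy(1,2)])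
    then have "rc ?B (\<lambda>H. x H + y H) \<in> carrier ?G" unfolding car by (rule imageI)
    then show "P \<otimes>\<^bsub>?G\<^esub> Q \<in> carrier ?G" unfolding xy(3,4) mm .
  next
    have "rc ?B (\<lambda>H. 0) \<in> carrier ?G" unfolding car by (rule imageI[OF addsub_zeroI[OF Z]])
    then show "\<one>\<^bsub>?G\<^esub> \<in> carrier ?G" unfolding one .
  next
    fix P Q R assume "P \<in> carrier ?G" "Q \<in> carrier ?G" "R \<in> carrier ?G"
    then obtain x y z where xyz: "P = rc ?B x" "Q = rc ?B y" "R = rc ?B z" unfolding car by blast
    have e: "(\<lambda>H. (x H + y H) + z H) = (\<lambda>H. x H + (y H + z H))" by (simp add: add.assoc)
    show "P \<otimes>\<^bsub>?G\<^esub> Q \<otimes>\<^bsub>?G\<^esub> R = P \<otimes>\<^bsub>?G\<^esub> (Q \<otimes>\<^bsub>?G\<^esub> R)"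
      unfolding xyz mm e ..
  next
    fix P Q assume "P \<in> carrier ?G" "Q \<in> carrier ?G"
    then obtain x y where xy: "P = rc ?B x" "Q = rc ?B y" unfolding car by blast
    have e: "(\<lambda>H. x H + y H) = (\<lambda>H. y H + x H)" by (simp add: add.commute)
    show "P \<otimes>\<^bsub>?G\<^esub> Q = Q \<otimes>\<^bsub>?G\<^esub> P" unfolding xy mm e ..
  next
    fix P assume "P \<in> carrier ?G"
    then obtain x where x: "P = rc ?B x" unfolding car by blast
    show "\<one>\<^bsub>?G\<^esub> \<otimes>\<^bsub>?G\<^esub> P = P" unfolding x one mm by simp
  next
    fix P assume "P \<in> carrier ?G"
    then obtain x where x: "x \<in> ?Z" "P = rc ?B x" unfolding car by blast
    have nz: "(\<lambda>H. - x H) \<in> ?Z" by (rule addsub_negI[OF Z x(1)])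
    have "rc ?B (\<lambda>H. - x H) \<otimes>\<^bsub>?G\<^esub> P = \<one>\<^bsub>?G\<^esub>" unfolding x(2) one mm by simp
    moreover have "rc ?B (\<lambda>H. - x H) \<in> carrier ?G" unfolding car by (rule imageI[OF nz])
    ultimately show "\<exists>y\<in>carrier ?G. y \<otimes>\<^bsub>?G\<^esub> P = \<one>\<^bsub>?G\<^esub>" by blast
  qed
qed

lemma pull_cob:
  assumes d1: "digraph V1 E1" and d2: "digraph V2 E2" and reg: "regular_morphism V2 E2 V1 E1 \<phi>"
    and f: "ring_homomorphism f" and b: "b \<in> coboundaries V1 E1 n"
  shows "pull V1 V2 E2 n \<phi> f b \<in> coboundaries V2 E2 n"
proof (cases n)
  case 0
  then have "b = (\<lambda>_. 0)" using b by simp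
  then show ?thesis using 0 pull_zero[OF f] by simp
next
  case (Suc m)
  then obtain c where c: "c \<in> cochains V1 E1 m" "b = dmap V1 E1 m c" using b by auto
  have "pull V1 V2 E2 n \<phi> f b = dmap V2 E2 m (pull V1 V2 E2 m \<phi> f c)"
    unfolding Suc c(2) by (rule pull_dmap[OF d1 d2 reg f c(1)])
  then show ?thesis unfolding Suc coboundaries.simps by (simp add: rev_image_eqI[OF pull_cochain])
qed

lemma pull_coc:
  assumes d1: "digraph V1 E1" and d2: "digraph V2 E2" and reg: "regular_morphism V2 E2 V1 E1 \<phi>"
    and f: "ring_homomorphism f" and x: "x \<in> cocycles V1 E1 n"
  shows "pull V1 V2 E2 n \<phi> f x \<in> cocycles V2 E2 n"
proof -
  have xc: "x \<in> cochains V1 E1 n" and dx: "dmap V1 E1 n x = (\<lambda>_. 0)" using x unfolding cocycles_def by auto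
  have "dmap V2 E2 n (pull V1 V2 E2 n \<phi> f x) = pull V1 V2 E2 (Suc n) \<phi> f (dmap V1 E1 n x)"
    by (rule pull_dmap[OF d1 d2 reg f xc, symmetric])
  also have "\<dots> = (\<lambda>_. 0)" unfolding dx by (rule pull_zero[OF f])
  finally show ?thesis unfolding cocycles_def using pull_cochain by simp
qed

lemma cohom_map_rc:
  fixes V1 :: "'v::linorder set" and V2 :: "'w::linorder set" and x :: "('v \<times> 'v) set \<Rightarrow> 'r::comm_ring_1"
    and f :: "'r \<Rightarrow> 's::comm_ring_1"
  assumes d1: "digraph V1 E1" and d2: "digraph V2 E2" and reg: "regular_morphism V2 E2 V1 E1 \<phi>"
    and f: "ring_homomorphism f" and x: "x \<in> cocycles V1 E1 n"
  shows "cohom_map V1 V2 E2 n \<phi> f (rc (coboundaries V1 E1 n) x) = rc (coboundaries V2 E2 n) (pull V1 V2 E2 n \<phi> f x)"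
proof -
  let ?B1 = "coboundaries V1 E1 n :: (('v \<times> 'v) set \<Rightarrow> 'r) set" and ?B2 = "coboundaries V2 E2 n :: (('w \<times> 'w) set \<Rightarrow> 's) set" and ?p = "pull V1 V2 E2 n \<phi> f"
  have B1: "addsub ?B1" and B2: "addsub ?B2" by (rule addsub_coboundaries)+
  have "cohom_map V1 V2 E2 n \<phi> f (rc ?B1 x) = (\<Union>b\<in>?B1. rc ?B2 (?p (\<lambda>H. b H + x H)))"
    unfolding cohom_map_def rcoset_eq0 rc_def[of ?B1] image_image ..
  also have "\<dots> = (\<Union>b\<in>?B1. rc ?B2 (?p x))"
  proof -
    have eqs: "rc ?B2 (?p (\<lambda>H. b H + x H)) = rc ?B2 (?p x)" if b: "b \<in> ?B1" for b
    proof -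
    have "?p (\<lambda>H. b H + x H) = (\<lambda>H. ?p b H + ?p x H)" by (rule pull_add[OF f])
    moreover have "?p b \<in> ?B2" by (rule pull_cob[OF d1 d2 reg f b])
    ultimately show "rc ?B2 (?p (\<lambda>H. b H + x H)) = rc ?B2 (?p x)" using rc_absorb[OF B2] by simp
    qed
    have "(\<lambda>b. rc ?B2 (?p (\<lambda>H. b H + x H))) ` ?B1 = (\<lambda>b. rc ?B2 (?p x)) ` ?B1"
      by (rule image_cong[OF refl eqs])
    then show ?thesis by simp
  qed
  also have "\<dots> = rc ?B2 (?p x)" using addsub_zeroI[OF B1] by blast
  finally show ?thesis .
qed

lemma pull_id:
  assumes x: "x \<in> cochains V E n"
  shows "pull V V E n id id x = x"
proof (rule ext)
  fix H
  show "pull V V E n id id x H = x H"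
  proof (cases "H \<in> multipaths_n V E n")
    case True
    have "map_prod id id ` H = H" by (simp add: id_def)
    moreover have "gauge V V id H = 1" by (rule gauge_id)
    ultimately show ?thesis unfolding pull_def using True by simp
  next
    case False then show ?thesis unfolding pull_def using cochain_zero[OF x False] by simp
  qed
qed

lemma pull_comp:
  assumes d1: "digraph V1 E1" and d2: "digraph V2 E2" and d3: "digraph V3 E3"
    and r1: "regular_morphism V2 E2 V1 E1 \<phi>" and r2: "regular_morphism V3 E3 V2 E2 \<psi>"
    and f: "ring_homomorphism f" and g: "ring_homomorphism g"
  shows "pull V2 V3 E3 n \<psi> g (pull V1 V2 E2 n \<phi> f x) = pull V1 V3 E3 n (\<phi> \<circ> \<psi>) (g \<circ> f) x"
proof (rule ext)
  fix H
  show "pull V2 V3 E3 n \<psi> g (pull V1 V2 E2 n \<phi> f x) H = pull V1 V3 E3 n (\<phi> \<circ> \<psi>) (g \<circ> f) x H"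
  proof (cases "H \<in> multipaths_n V3 E3 n")
    case True
    have HE: "H \<subseteq> E3" using True unfolding multipaths_n_def multipaths_def by auto
    have Hmp: "H \<in> multipaths V3 E3" using True unfolding multipaths_n_def by simp
    have QH: "map_prod \<psi> \<psi> ` H \<in> multipaths_n V2 E2 n" using mpn_map[OF d2 d3 r2 HE] True by simp
    have im: "map_prod (\<phi> \<circ> \<psi>) (\<phi> \<circ> \<psi>) ` H = map_prod \<phi> \<phi> ` map_prod \<psi> \<psi> ` H"
      by (simp add: map_prod_compose image_comp)
    have gc: "gauge V1 V3 (\<phi> \<circ> \<psi>) H = gauge V1 V2 \<phi> (map_prod \<psi> \<psi> ` H) * gauge V2 V3 \<psi> H"
      by (rule gauge_comp[OF d1 d2 d3 r1 r2 Hmp])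
    show ?thesis unfolding pull_def using True QH
      by (simp add: im gc rh_mult[OF g] rh_of_int[OF g] ac_simps)
  next
    case False then show ?thesis unfolding pull_def by simp
  qed
qed

theorem theorem1p3:
  fixes V1 :: "'a::linorder set" and E1 :: "('a \<times> 'a) set"
    and V2 :: "'b::linorder set" and E2 :: "('b \<times> 'b) set"
    and V3 :: "'c::linorder set" and E3 :: "('c \<times> 'c) set"
    and \<phi> :: "'b \<Rightarrow> 'a" and \<psi> :: "'c \<Rightarrow> 'b"
    and f :: "'r::comm_ring_1 \<Rightarrow> 's::comm_ring_1" and g :: "'s \<Rightarrow> 't::comm_ring_1"
    and n :: nat
  assumes "digraph V1 E1" and "digraph V2 E2" and "digraph V3 E3"
    and "regular_morphism V2 E2 V1 E1 \<phi>" and "regular_morphism V3 E3 V2 E2 \<psi>"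
    and "ring_homomorphism f" and "ring_homomorphism g"
  shows "comm_group (mp_cohom V1 E1 n :: (('a \<times> 'a) set \<Rightarrow> 'r) set monoid) \<and>
         cohom_map V1 V2 E2 n \<phi> f
           \<in> hom (mp_cohom V1 E1 n :: (('a \<times> 'a) set \<Rightarrow> 'r) set monoid) (mp_cohom V2 E2 n) \<and>
         (\<forall>cl \<in> carrier (mp_cohom V1 E1 n :: (('a \<times> 'a) set \<Rightarrow> 'r) set monoid).
           cohom_map V1 V1 E1 n id id cl = cl) \<and>
         (\<forall>cl \<in> carrier (mp_cohom V1 E1 n :: (('a \<times> 'a) set \<Rightarrow> 'r) set monoid).
           cohom_map V2 V3 E3 n \<psi> g (cohom_map V1 V2 E2 n \<phi> f cl)
             = cohom_map V1 V3 E3 n (\<phi> \<circ> \<psi>) (g \<circ> f) cl)"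
proof (intro conjI ballI)
  note d1 = assms(1) and d2 = assms(2) and d3 = assms(3) and r1 = assms(4) and r2 = assms(5)
    and f = assms(6) and g = assms(7)
  let ?G1 = "mp_cohom V1 E1 n :: (('a \<times> 'a) set \<Rightarrow> 'r) set monoid"
  let ?G2 = "mp_cohom V2 E2 n :: (('b \<times> 'b) set \<Rightarrow> 's) set monoid"
  let ?B1 = "coboundaries V1 E1 n :: (('a \<times> 'a) set \<Rightarrow> 'r) set"
  let ?Z1 = "cocycles V1 E1 n :: (('a \<times> 'a) set \<Rightarrow> 'r) set"
  let ?B2 = "coboundaries V2 E2 n :: (('b \<times> 'b) set \<Rightarrow> 's) set"
  let ?Z2 = "cocycles V2 E2 n :: (('b \<times> 'b) set \<Rightarrow> 's) set"
  have B1: "addsub ?B1" and B2: "addsub ?B2" by (rule addsub_coboundaries)+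
  have car1: "carrier ?G1 = rc ?B1 ` ?Z1" by (rule carrier_cohom)
  have car2: "carrier ?G2 = rc ?B2 ` ?Z2" by (rule carrier_cohom)
  have mm1: "\<And>x y. rc ?B1 x \<otimes>\<^bsub>?G1\<^esub> rc ?B1 y = rc ?B1 (\<lambda>H. x H + y H)"
    unfolding mult_cohom by (rule rc_mult[OF B1])
  have mm2: "\<And>x y. rc ?B2 x \<otimes>\<^bsub>?G2\<^esub> rc ?B2 y = rc ?B2 (\<lambda>H. x H + y H)"
    unfolding mult_cohom by (rule rc_mult[OF B2])
  show "comm_group ?G1" by (rule comm_group_cohom)
  show "cohom_map V1 V2 E2 n \<phi> f \<in> hom ?G1 ?G2"
  proof (rule homI)
    fix P assume "P \<in> carrier ?G1"
    then obtain x where x: "x \<in> ?Z1" "P = rc ?B1 x" unfolding car1 by blast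
    have "pull V1 V2 E2 n \<phi> f x \<in> ?Z2" by (rule pull_coc[OF d1 d2 r1 f x(1)])
    then show "cohom_map V1 V2 E2 n \<phi> f P \<in> carrier ?G2"
      unfolding x(2) cohom_map_rc[OF d1 d2 r1 f x(1)] car2 by (rule imageI)
  next
    fix P Q assume "P \<in> carrier ?G1" "Q \<in> carrier ?G1"
    then obtain x y where xy: "x \<in> ?Z1" "P = rc ?B1 x" "y \<in> ?Z1" "Q = rc ?B1 y" unfolding car1 by blast
    have xy1: "(\<lambda>H. x H + y H) \<in> ?Z1" by (rule addsub_addI[OF addsub_cocycles xy(1,3)])
    show "cohom_map V1 V2 E2 n \<phi> f (P \<otimes>\<^bsub>?G1\<^esub> Q) = cohom_map V1 V2 E2 n \<phi> f P \<otimes>\<^bsub>?G2\<^esub> cohom_map V1 V2 E2 n \<phi> f Q"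
      unfolding xy(2,4) mm1 cohom_map_rc[OF d1 d2 r1 f xy(1)] cohom_map_rc[OF d1 d2 r1 f xy(3)]
        cohom_map_rc[OF d1 d2 r1 f xy1] mm2 pull_add[OF f] ..
  qed
next
  note d1 = assms(1) and d2 = assms(2) and d3 = assms(3) and r1 = assms(4) and r2 = assms(5)
    and f = assms(6) and g = assms(7)
  fix cl assume "cl \<in> carrier (mp_cohom V1 E1 n :: (('a \<times> 'a) set \<Rightarrow> 'r) set monoid)"
  then obtain x where x: "x \<in> (cocycles V1 E1 n :: (('a \<times> 'a) set \<Rightarrow> 'r) set)" "cl = rc (coboundaries V1 E1 n) x"
    unfolding carrier_cohom by blast
  have xc: "x \<in> cochains V1 E1 n" using x(1) unfolding cocycles_def by simp
  show "cohom_map V1 V1 E1 n id id cl = cl"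
    unfolding x(2) cohom_map_rc[OF d1 d1 reg_id rh_id x(1)] pull_id[OF xc] ..
next
  note d1 = assms(1) and d2 = assms(2) and d3 = assms(3) and r1 = assms(4) and r2 = assms(5)
    and f = assms(6) and g = assms(7)
  fix cl assume "cl \<in> carrier (mp_cohom V1 E1 n :: (('a \<times> 'a) set \<Rightarrow> 'r) set monoid)"
  then obtain x where x: "x \<in> (cocycles V1 E1 n :: (('a \<times> 'a) set \<Rightarrow> 'r) set)" "cl = rc (coboundaries V1 E1 n) x"
    unfolding carrier_cohom by blast
  have px: "pull V1 V2 E2 n \<phi> f x \<in> cocycles V2 E2 n" by (rule pull_coc[OF d1 d2 r1 f x(1)])
  show "cohom_map V2 V3 E3 n \<psi> g (cohom_map V1 V2 E2 n \<phi> f cl) = cohom_map V1 V3 E3 n (\<phi> \<circ> \<psi>) (g \<circ> f) cl"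
    unfolding x(2) cohom_map_rc[OF d1 d2 r1 f x(1)] cohom_map_rc[OF d2 d3 r2 g px]
      cohom_map_rc[OF d1 d3 reg_comp[OF r1 r2] rh_comp[OF f g] x(1)] pull_comp[OF d1 d2 d3 r1 r2 f g] ..
qed

end
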